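(* For complex $a,c$ with $|a|<1$ and $|c|<1$, \begin{align*} \sum_{n=0}^\infty \frac{(q/c; q)_n c^n}{\bigl(q^2; q^2\bigr)_n (1+aq^n)} q^{n(n+1)/2} =\frac{(qa, qc, -ac; q)_\infty}{(q, ac, -a; q)_{\infty}}\sum_{n=0}^\infty \sum_{j=-n}^n (-1)^j \bigl(1-q^{2n+1}\bigr) q^{n^2-j^2}\frac{(q/a, q/c; q)_n (ac)^n}{(qa, qc; q)_n}. \end{align*}
   Context: Throughout, $q$ is a complex number with $0<|q|<1$. For $x\in\mathbb{C}$ and base $p\in\{q,q^2\}$, $(x;p)_\infty=\prod_{k=0}^\infty(1-xp^k)$ and, for an integer $n\ge 0$, $(x;p)_n=\prod_{k=0}^{n-1}(1-xp^k)$; also $(x_1,\dots,x_m;p)_n=(x_1;p)_n\cdots(x_m;p)_n$ for $n$ an integer or $\infty$. *)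

theory Defs
  imports "HOL-Analysis.Analysis"
begin

definition qpoch :: "complex \<Rightarrow> complex \<Rightarrow> nat \<Rightarrow> complex" where
  "qpoch x p n = (\<Prod>k<n. 1 - x * p ^ k)"

definition qpoch_inf :: "complex \<Rightarrow> complex \<Rightarrow> complex" where
  "qpoch_inf x p = (\<Prod>k. 1 - x * p ^ k)"

end

theory Submission
  imports Defs "HOL-Computational_Algebra.Formal_Power_Series" "HOL-Real_Asymp.Real_Asymp"
begin

lemma qpoch_0 [simp]: "qpoch x p 0 = 1"
  by (simp add: qpoch_def)

lemma qpoch_Suc: "qpoch x p (Suc n) = qpoch x p n * (1 - x * p ^ n)"
  by (simp add: qpoch_def)

lemma qpoch_add: "qpoch x p (m + n) = qpoch x p m * qpoch (x * p ^ m) p n"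
  by (induction n) (simp_all add: qpoch_Suc power_add mult_ac)

lemma qpoch_nonzero:
  assumes "norm x < 1" "norm p \<le> 1"
  shows "qpoch x p n \<noteq> 0"
proof -
  have "1 - x * p ^ k \<noteq> 0" for k
  proof
    assume "1 - x * p ^ k = 0"
    hence "x * p ^ k = 1" by simp
    hence "norm (x * p ^ k) = 1" by simp
    moreover have "norm (x * p ^ k) \<le> norm x"
      using assms by (simp add: norm_mult norm_power mult_left_le power_le_one)
    ultimately show False using assms by simp
  qed
  thus ?thesis by (simp add: qpoch_def)
qed

lemma summable_prod_ratio:
  fixes \<rho> :: "nat \<Rightarrow> real"
  assumes nn: "\<And>k. 0 \<le> \<rho> k" and lim: "\<rho> \<longlonglongrightarrow> l" and l1: "l < 1"
  shows "summable (\<lambda>m. \<Prod>k<m. \<rho> k)"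
proof -
  have l0: "0 \<le> l" using nn lim by (metis LIMSEQ_le_const)
  define c where "c = (1 + l) / 2"
  have "c < 1" "l < c" using l1 by (auto simp: c_def)
  then have "eventually (\<lambda>k. \<rho> k < c) sequentially"
    using lim order_tendstoD(2) by blast
  then obtain N where N: "\<And>k. k \<ge> N \<Longrightarrow> \<rho> k < c"
    by (auto simp: eventually_at_top_linorder)
  show ?thesis
  proof (rule summable_ratio_test[of c N])
    show "c < 1" by fact
    fix n assume "N \<le> n"
    hence "\<rho> n \<le> c" using N by force
    moreover have "0 \<le> (\<Prod>k<n. \<rho> k)" by (simp add: nn prod_nonneg)
    ultimately have "\<rho> n * (\<Prod>k<n. \<rho> k) \<le> c * (\<Prod>k<n. \<rho> k)"
      by (rule mult_right_mono)
    thus "norm (\<Prod>k<Suc n. \<rho> k) \<le> c * norm (\<Prod>k<n. \<rho> k)"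
      by (simp add: nn prod_nonneg abs_prod mult.commute)
  qed
qed

locale qctx =
  fixes q :: complex
  assumes q0: "q \<noteq> 0" and q1: "norm q < 1"
begin

lemma convergent_prod_qpoch: "convergent_prod (\<lambda>k. 1 - x * q ^ k)"
proof -
  have "summable (\<lambda>k. norm x * norm q ^ k)"
    using q1 by (intro summable_mult summable_geometric) auto
  hence "summable (\<lambda>k. norm ((1 - x * q ^ k) - 1))"
    by (simp add: norm_mult norm_power)
  thus ?thesis
    by (intro abs_convergent_prod_imp_convergent_prod summable_imp_abs_convergent_prod)
qed

lemma qpoch_lim: "(\<lambda>n. qpoch x q n) \<longlonglongrightarrow> qpoch_inf x q"
proof -
  have "(\<lambda>n. \<Prod>k\<le>n. 1 - x * q ^ k) \<longlonglongrightarrow> qpoch_inf x q"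
    unfolding qpoch_inf_def by (rule convergent_prod_LIMSEQ[OF convergent_prod_qpoch])
  hence "(\<lambda>n. qpoch x q (Suc n)) \<longlonglongrightarrow> qpoch_inf x q"
    by (simp add: qpoch_def lessThan_Suc_atMost)
  thus ?thesis by (rule LIMSEQ_imp_Suc)
qed

lemma qpoch_inf_nonzero:
  assumes "\<And>k. x * q ^ k \<noteq> 1"
  shows "qpoch_inf x q \<noteq> 0"
  unfolding qpoch_inf_def
  by (rule prodinf_nonzero[OF convergent_prod_qpoch]) (use assms in auto)

lemma qpoch_inf_nonzero':
  assumes "norm x < 1"
  shows "qpoch_inf x q \<noteq> 0"
proof (rule qpoch_inf_nonzero)
  fix k
  have "norm (x * q ^ k) \<le> norm x"
    using q1 by (simp add: norm_mult norm_power mult_left_le power_le_one)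
  thus "x * q ^ k \<noteq> 1" using assms by auto
qed

lemma qpoch_inf_split: "qpoch_inf x q = qpoch x q n * qpoch_inf (x * q ^ n) q"
proof -
  have "(\<lambda>m. qpoch x q (m + n)) \<longlonglongrightarrow> qpoch_inf x q"
    using LIMSEQ_ignore_initial_segment[OF qpoch_lim, of x n] by simp
  moreover have "(\<lambda>m. qpoch x q (m + n)) = (\<lambda>m. qpoch x q n * qpoch (x * q ^ n) q m)"
    by (metis qpoch_add add.commute)
  moreover have "(\<lambda>m. qpoch x q n * qpoch (x * q ^ n) q m) \<longlonglongrightarrow> qpoch x q n * qpoch_inf (x * q ^ n) q"
    by (intro tendsto_mult tendsto_const qpoch_lim)
  ultimately show ?thesis using LIMSEQ_unique by metis
qed

lemma qpoch_inf_step: "qpoch_inf x q = (1 - x) * qpoch_inf (x * q) q"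
  using qpoch_inf_split[of x 1] by (simp add: qpoch_def)

lemma qpoch_inf_tail_lim:
  assumes "qpoch_inf x q \<noteq> 0"
  shows "(\<lambda>n. qpoch_inf (x * q ^ n) q) \<longlonglongrightarrow> 1"
proof -
  have nz: "qpoch x q n \<noteq> 0" for n
    using qpoch_inf_split[of x n] assms by auto
  have "(\<lambda>n. qpoch_inf x q / qpoch x q n) \<longlonglongrightarrow> qpoch_inf x q / qpoch_inf x q"
    by (intro tendsto_divide tendsto_const qpoch_lim assms)
  moreover have "(\<lambda>n. qpoch_inf x q / qpoch x q n) = (\<lambda>n. qpoch_inf (x * q ^ n) q)"
    using qpoch_inf_split nz by (auto simp: field_simps)
  ultimately show ?thesis using assms by simp
qed

end

locale gauss = qctx +
  fixes y u v :: complex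
  assumes y1: "norm y < 1" and u1: "norm u \<le> 1" and v1: "norm v \<le> 1"
    and uv1: "norm (u * v) < 1"
begin

definition gP :: "complex \<Rightarrow> nat \<Rightarrow> complex" where
  "gP x m = (\<Prod>k<m. x - u * q ^ k)"
definition gQ :: "nat \<Rightarrow> complex" where
  "gQ m = (\<Prod>k<m. y - v * q ^ k)"
definition gD :: "nat \<Rightarrow> complex" where
  "gD m = (\<Prod>k<m. (1 - q ^ Suc k) * (1 - u * v * q ^ k))"
definition gt :: "complex \<Rightarrow> nat \<Rightarrow> complex" where
  "gt x m = gP x m * gQ m / gD m"
definition G :: "complex \<Rightarrow> complex" where
  "G x = suminf (gt x)"

definition \<rho> :: "nat \<Rightarrow> real" where
  "\<rho> k = (1 + norm q ^ k) * (norm y + norm q ^ k) /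
          ((1 - norm q ^ Suc k) * (1 - norm (u * v) * norm q ^ k))"
definition gM :: "nat \<Rightarrow> real" where
  "gM m = (\<Prod>k<m. \<rho> k)"

lemma nq_pow_lt1: "norm q ^ Suc k < 1"
  by (rule power_Suc_less_one) (use q0 q1 in auto)

lemma nq_pow_le1: "norm q ^ k \<le> 1"
  using q1 by (simp add: power_le_one)

lemma d1_nz: "1 - q ^ Suc k \<noteq> 0"
proof
  assume "1 - q ^ Suc k = 0"
  hence "norm (q ^ Suc k) = 1" by (metis eq_iff_diff_eq_0 norm_one)
  thus False using nq_pow_lt1[of k] by (metis norm_power less_irrefl)
qed

lemma d2_nz: "1 - u * v * q ^ k \<noteq> 0"
proof
  assume "1 - u * v * q ^ k = 0"
  hence "norm (u * v * q ^ k) = 1" by (metis eq_iff_diff_eq_0 norm_one)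
  moreover have "norm (u * v * q ^ k) \<le> norm (u * v)"
    using nq_pow_le1[of k] by (simp add: norm_mult norm_power mult_left_le)
  ultimately show False using uv1 by simp
qed

lemma gD_nz: "gD m \<noteq> 0"
  unfolding gD_def using d1_nz d2_nz by (simp add: prod_zero_iff)

lemma gt_prod: "gt x m = (\<Prod>k<m. (x - u * q ^ k) * (y - v * q ^ k) / ((1 - q ^ Suc k) * (1 - u * v * q ^ k)))"
  unfolding gt_def gP_def gQ_def gD_def by (simp add: prod_dividef prod.distrib)

lemma rho_nonneg: "0 \<le> \<rho> k"
proof -
  have "norm q ^ Suc k < 1" by (rule nq_pow_lt1)
  moreover have "norm (u * v) * norm q ^ k < 1"
    using uv1 nq_pow_le1[of k] by (metis le_less_trans mult_left_le norm_ge_zero)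
  ultimately show ?thesis unfolding \<rho>_def by (intro divide_nonneg_pos mult_nonneg_nonneg mult_pos_pos) auto
qed

lemma rho_lim: "\<rho> \<longlonglongrightarrow> norm y"
proof -
  have z: "(\<lambda>k. norm q ^ k) \<longlonglongrightarrow> 0" using q1 by (intro LIMSEQ_power_zero) auto
  have z': "(\<lambda>k. norm q ^ Suc k) \<longlonglongrightarrow> 0" using LIMSEQ_Suc[OF z] by simp
  have "\<rho> \<longlonglongrightarrow> (1 + 0) * (norm y + 0) / ((1 - 0) * (1 - norm (u * v) * 0))"
    unfolding \<rho>_def by (intro tendsto_intros z z') auto
  thus ?thesis by simp
qed

lemma summable_gM: "summable gM"
  unfolding gM_def by (rule summable_prod_ratio[OF rho_nonneg rho_lim y1])

lemma gt_bound:
  assumes "norm x \<le> 1"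
  shows "norm (gt x m) \<le> gM m"
proof -
  have "norm ((x - u * q ^ k) * (y - v * q ^ k) / ((1 - q ^ Suc k) * (1 - u * v * q ^ k))) \<le> \<rho> k" for k
  proof -
    have n1: "norm (x - u * q ^ k) \<le> 1 + norm q ^ k"
    proof -
      have "norm (x - u * q ^ k) \<le> norm x + norm u * norm q ^ k"
        by (metis norm_triangle_ineq4 norm_mult norm_power)
      also have "\<dots> \<le> 1 + 1 * norm q ^ k"
        using assms u1 by (intro add_mono mult_right_mono) auto
      finally show ?thesis by simp
    qed
    have n2: "norm (y - v * q ^ k) \<le> norm y + norm q ^ k"
    proof -
      have "norm (y - v * q ^ k) \<le> norm y + norm v * norm q ^ k"
        by (metis norm_triangle_ineq4 norm_mult norm_power)
      also have "\<dots> \<le> norm y + 1 * norm q ^ k"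
        using v1 by (intro add_mono mult_right_mono) auto
      finally show ?thesis by simp
    qed
    have n3: "1 - norm q ^ Suc k \<le> norm (1 - q ^ Suc k)"
      by (metis norm_one norm_power norm_triangle_ineq2)
    have n4: "1 - norm (u * v) * norm q ^ k \<le> norm (1 - u * v * q ^ k)"
      by (metis norm_one norm_mult norm_power norm_triangle_ineq2)
    have p3: "0 < 1 - norm q ^ Suc k" using nq_pow_lt1[of k] by simp
    have p4: "0 < 1 - norm (u * v) * norm q ^ k"
      using uv1 nq_pow_le1[of k] by (smt (verit) mult_left_le norm_ge_zero)
    have "norm ((x - u * q ^ k) * (y - v * q ^ k)) \<le> (1 + norm q ^ k) * (norm y + norm q ^ k)"
      unfolding norm_mult by (intro mult_mono n1 n2) auto
    moreover have "(1 - norm q ^ Suc k) * (1 - norm (u * v) * norm q ^ k) \<le> norm (1 - q ^ Suc k) * norm (1 - u * v * q ^ k)"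
      by (rule mult_mono[OF n3 n4]) (use p3 p4 in auto)
    hence "(1 - norm q ^ Suc k) * (1 - norm (u * v) * norm q ^ k) \<le> norm ((1 - q ^ Suc k) * (1 - u * v * q ^ k))"
      by (simp only: norm_mult)
    ultimately show ?thesis
      unfolding \<rho>_def norm_divide
      by (intro frac_le) (use p3 p4 in auto)
  qed
  hence "(\<Prod>k<m. norm ((x - u * q ^ k) * (y - v * q ^ k) / ((1 - q ^ Suc k) * (1 - u * v * q ^ k)))) \<le> (\<Prod>k<m. \<rho> k)"
    by (intro prod_mono) auto
  thus ?thesis unfolding gt_prod gM_def by (simp add: prod_norm)
qed

lemma summable_gt:
  assumes "norm x \<le> 1"
  shows "summable (gt x)"
  by (rule summable_comparison_test'[OF summable_gM]) (use gt_bound[OF assms] in auto)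

lemma gP_Suc: "gP x (Suc m) = gP x m * (x - u * q ^ m)"
  by (simp add: gP_def)
lemma gQ_Suc: "gQ (Suc m) = gQ m * (y - v * q ^ m)"
  by (simp add: gQ_def)
lemma gD_Suc: "gD (Suc m) = gD m * ((1 - q ^ Suc m) * (1 - u * v * q ^ m))"
  by (simp add: gD_def)
lemma gt_0 [simp]: "gt x 0 = 1"
  by (simp add: gt_def gP_def gQ_def gD_def)

lemma gP_shift: "gP (x * q) (Suc m) = (x * q - u) * q ^ m * gP x m"
proof (induction m)
  case 0
  then show ?case by (simp add: gP_def)
next
  case (Suc m)
  have "gP (x * q) (Suc (Suc m)) = gP (x * q) (Suc m) * (x * q - u * q ^ Suc m)"
    by (rule gP_Suc)
  also have "x * q - u * q ^ Suc m = q * (x - u * q ^ m)"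
    by (simp add: algebra_simps)
  also have "gP (x * q) (Suc m) * (q * (x - u * q ^ m)) = (x * q - u) * q ^ m * gP x m * (q * (x - u * q ^ m))"
    by (simp only: Suc)
  also have "\<dots> = (x * q - u) * q ^ Suc m * gP x (Suc m)"
    by (simp add: gP_Suc algebra_simps)
  finally show ?case .
qed

lemma step_id:
  "(1 - x * y) * gt x (Suc N) - (1 - x * v) * gt (x * q) (Suc N)
     = x * gt x N * (y - v * q ^ N) - x * gt x (Suc N) * (y - v * q ^ Suc N)"
proof -
  define w where "w = q ^ N"
  define d1 where "d1 = 1 - q * w"
  define d2 where "d2 = 1 - u * v * w"
  define K where "K = gP x N * gQ N * (y - v * w) / (gD N * d1 * d2)"
  have nz: "gD N \<noteq> 0" "d1 \<noteq> 0" "d2 \<noteq> 0"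
    using gD_nz d1_nz[of N] d2_nz[of N] by (auto simp: d1_def d2_def w_def)
  have e1: "gt x (Suc N) = K * (x - u * w)"
    unfolding gt_def gP_Suc gQ_Suc gD_Suc K_def using nz
    by (simp add: w_def d1_def d2_def field_simps)
  have e2: "gt (x * q) (Suc N) = K * ((x * q - u) * w)"
    unfolding gt_def gP_shift gQ_Suc gD_Suc K_def using nz
    by (simp add: w_def d1_def d2_def field_simps)
  have e3: "x * gt x N * (y - v * w) = K * (x * d1 * d2)"
    unfolding gt_def K_def using nz by (simp add: field_simps)
  have poly: "(1 - x * y) * (x - u * w) - (1 - x * v) * ((x * q - u) * w)
      = x * d1 * d2 - x * (x - u * w) * (y - v * (q * w))"
    unfolding d1_def d2_def by algebra
  have "(1 - x * y) * (K * (x - u * w)) - (1 - x * v) * (K * ((x * q - u) * w))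
      = K * ((1 - x * y) * (x - u * w) - (1 - x * v) * ((x * q - u) * w))"
    by (simp add: algebra_simps)
  also have "\<dots> = K * (x * d1 * d2 - x * (x - u * w) * (y - v * (q * w)))"
    by (simp only: poly)
  also have "\<dots> = K * (x * d1 * d2) - x * (K * (x - u * w)) * (y - v * (q * w))"
    by (simp add: algebra_simps)
  also have "\<dots> = x * gt x N * (y - v * w) - x * gt x (Suc N) * (y - v * (q * w))"
    by (simp only: e1 e3)
  finally have "(1 - x * y) * (K * (x - u * w)) - (1 - x * v) * (K * ((x * q - u) * w))
     = x * gt x N * (y - v * w) - x * gt x (Suc N) * (y - v * (q * w))" .
  thus ?thesis
    unfolding e1 e2 by (simp add: w_def)
qed

lemma partial_tele:
  "(1 - x * y) * (\<Sum>m<Suc N. gt x m) - (1 - x * v) * (\<Sum>m<Suc N. gt (x * q) m)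
     = - x * gt x N * (y - v * q ^ N)"
proof (induction N)
  case 0
  then show ?case by (simp add: algebra_simps)
next
  case (Suc N)
  have "(1 - x * y) * (\<Sum>m<Suc (Suc N). gt x m) - (1 - x * v) * (\<Sum>m<Suc (Suc N). gt (x * q) m)
      = ((1 - x * y) * (\<Sum>m<Suc N. gt x m) - (1 - x * v) * (\<Sum>m<Suc N. gt (x * q) m))
        + ((1 - x * y) * gt x (Suc N) - (1 - x * v) * gt (x * q) (Suc N))"
    by (simp add: algebra_simps)
  also have "\<dots> = - x * gt x (Suc N) * (y - v * q ^ Suc N)"
    unfolding Suc step_id by (simp add: algebra_simps)
  finally show ?case .
qed

lemma norm_xq: "norm x \<le> 1 \<Longrightarrow> norm (x * q ^ n) \<le> 1"
  using nq_pow_le1[of n] by (simp add: norm_mult norm_power mult_le_one)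

lemma feq:
  assumes "norm x \<le> 1"
  shows "(1 - x * y) * G x = (1 - x * v) * G (x * q)"
proof -
  have nxq: "norm (x * q) \<le> 1" using norm_xq[OF assms, of 1] by simp
  have s1: "(\<lambda>N. \<Sum>m<Suc N. gt x m) \<longlonglongrightarrow> G x"
    unfolding G_def using summable_gt[OF assms] LIMSEQ_Suc summable_LIMSEQ by blast
  have s2: "(\<lambda>N. \<Sum>m<Suc N. gt (x * q) m) \<longlonglongrightarrow> G (x * q)"
    unfolding G_def using summable_gt[OF nxq] LIMSEQ_Suc summable_LIMSEQ by blast
  have l1: "(\<lambda>N. (1 - x * y) * (\<Sum>m<Suc N. gt x m) - (1 - x * v) * (\<Sum>m<Suc N. gt (x * q) m))
      \<longlonglongrightarrow> (1 - x * y) * G x - (1 - x * v) * G (x * q)"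
    by (intro tendsto_intros s1 s2)
  have z: "gt x \<longlonglongrightarrow> 0" using summable_LIMSEQ_zero[OF summable_gt[OF assms]] .
  have qz: "(\<lambda>N. q ^ N) \<longlonglongrightarrow> 0" using q1 by (rule LIMSEQ_power_zero)
  have "(\<lambda>N. - x * gt x N * (y - v * q ^ N)) \<longlonglongrightarrow> - x * 0 * (y - v * 0)"
    by (intro tendsto_intros z qz)
  hence l2: "(\<lambda>N. (1 - x * y) * (\<Sum>m<Suc N. gt x m) - (1 - x * v) * (\<Sum>m<Suc N. gt (x * q) m)) \<longlonglongrightarrow> 0"
    unfolding partial_tele by simp
  from LIMSEQ_unique[OF l1 l2] show ?thesis by simp
qed

lemma iter:
  assumes "norm x \<le> 1"
  shows "G x * qpoch (x * y) q n = qpoch (x * v) q n * G (x * q ^ n)"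
proof (induction n)
  case 0
  then show ?case by simp
next
  case (Suc n)
  have f: "(1 - x * q ^ n * y) * G (x * q ^ n) = (1 - x * q ^ n * v) * G (x * q ^ n * q)"
    by (rule feq[OF norm_xq[OF assms]])
  have "G x * qpoch (x * y) q (Suc n) = (G x * qpoch (x * y) q n) * (1 - x * y * q ^ n)"
    by (simp add: qpoch_Suc)
  also have "\<dots> = qpoch (x * v) q n * ((1 - x * q ^ n * y) * G (x * q ^ n))"
    unfolding Suc by (simp add: algebra_simps)
  also have "\<dots> = qpoch (x * v) q n * ((1 - x * q ^ n * v) * G (x * q ^ n * q))"
    unfolding f ..
  also have "\<dots> = qpoch (x * v) q (Suc n) * G (x * q ^ Suc n)"
    by (simp add: qpoch_Suc algebra_simps)
  finally show ?case .
qed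

lemma G_lim:
  assumes "norm x \<le> 1"
  shows "(\<lambda>n. G (x * q ^ n)) \<longlonglongrightarrow> G 0"
proof -
  have qz: "(\<lambda>n. x * q ^ n) \<longlonglongrightarrow> 0"
    using tendsto_mult[OF tendsto_const LIMSEQ_power_zero[OF q1], of x] by simp
  have lim: "(\<lambda>n. gt (x * q ^ n) k) \<longlonglongrightarrow> gt 0 k" for k
  proof -
    have "(\<lambda>n. gP (x * q ^ n) k) \<longlonglongrightarrow> gP 0 k"
      unfolding gP_def by (intro tendsto_prod tendsto_diff qz tendsto_const)
    thus ?thesis unfolding gt_def by (intro tendsto_intros) (use gD_nz in auto)
  qed
  have "eventually (\<lambda>(k, n). norm (gt (x * q ^ n) k) \<le> gM k) (at_top \<times>\<^sub>F sequentially)"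
    by (intro always_eventually) (auto intro!: gt_bound norm_xq assms)
  from tannerys_theorem[OF lim this summable_gM]
  show ?thesis unfolding G_def by simp
qed

lemma G_u: "G u = 1"
proof -
  have "gt u = (\<lambda>m. if m = 0 then 1 else 0)"
  proof
    fix m show "gt u m = (if m = 0 then 1 else 0)"
    proof (cases m)
      case (Suc k)
      have "gP u (Suc k) = 0" unfolding gP_def
        by (intro prod_zero bexI[of _ 0]) auto
      thus ?thesis using Suc by (simp add: gt_def)
    qed simp
  qed
  moreover have "(\<lambda>m::nat. if m = 0 then (1::complex) else 0) sums 1"
    using sums_single[of 0 "\<lambda>_. 1::complex"] by simp
  ultimately show ?thesis unfolding G_def by (simp add: sums_iff)
qed

theorem qgauss:
  assumes "norm x \<le> 1"
  shows "G x * qpoch_inf (x * y) q * qpoch_inf (u * v) q = qpoch_inf (x * v) q * qpoch_inf (u * y) q"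
proof -
  have main: "G z * qpoch_inf (z * y) q = qpoch_inf (z * v) q * G 0" if z: "norm z \<le> 1" for z
  proof -
    have "(\<lambda>n. G z * qpoch (z * y) q n) \<longlonglongrightarrow> G z * qpoch_inf (z * y) q"
      by (intro tendsto_intros qpoch_lim)
    moreover have "(\<lambda>n. G z * qpoch (z * y) q n) \<longlonglongrightarrow> qpoch_inf (z * v) q * G 0"
      unfolding iter[OF z] by (intro tendsto_intros qpoch_lim G_lim z)
    ultimately show ?thesis using LIMSEQ_unique by blast
  qed
  have "qpoch_inf (u * y) q = qpoch_inf (u * v) q * G 0"
    using main[OF u1] G_u by simp
  thus ?thesis using main[OF assms] by (simp add: algebra_simps)
qed

end

context qctx
begin

abbreviation qf :: "nat \<Rightarrow> complex" where
  "qf n \<equiv> qpoch q q n"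

lemma qf_nz: "qf n \<noteq> 0"
  using q1 by (intro qpoch_nonzero) auto

lemma qf_Suc: "qf (Suc n) = qf n * (1 - q ^ Suc n)"
  by (simp add: qpoch_Suc)

lemma pow_ne1: "q ^ Suc n \<noteq> 1"
proof
  assume "q ^ Suc n = 1"
  hence "norm q ^ Suc n = 1" by (metis norm_one norm_power)
  moreover have "norm q ^ Suc n < 1" by (rule power_Suc_less_one) (use q0 q1 in auto)
  ultimately show False by simp
qed

definition EE :: "complex fps" where "EE = Abs_fps (\<lambda>k. 1 / qf k)"
definition FF :: "complex fps" where "FF = Abs_fps (\<lambda>k. (-1) ^ k / qf k)"
definition Sc :: "complex fps \<Rightarrow> complex fps" where "Sc A = Abs_fps (\<lambda>n. q ^ n * fps_nth A n)"

lemma Sc_mult: "Sc (A * B) = Sc A * Sc B"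
proof (rule fps_ext)
  fix n
  have "fps_nth (Sc (A * B)) n = (\<Sum>i=0..n. q ^ n * (fps_nth A i * fps_nth B (n - i)))"
    by (simp add: Sc_def fps_mult_nth sum_distrib_left)
  also have "\<dots> = (\<Sum>i=0..n. (q ^ i * fps_nth A i) * (q ^ (n - i) * fps_nth B (n - i)))"
  proof (rule sum.cong)
    fix i assume "i \<in> {0..n}"
    hence "q ^ n = q ^ i * q ^ (n - i)" by (simp add: power_add[symmetric])
    thus "q ^ n * (fps_nth A i * fps_nth B (n - i)) = (q ^ i * fps_nth A i) * (q ^ (n - i) * fps_nth B (n - i))"
      by simp
  qed simp
  also have "\<dots> = fps_nth (Sc A * Sc B) n" by (simp add: Sc_def fps_mult_nth)
  finally show "fps_nth (Sc (A * B)) n = fps_nth (Sc A * Sc B) n" .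
qed

lemma EE_eq: "EE * (1 - fps_X) = Sc EE"
proof (rule fps_ext)
  fix n show "fps_nth (EE * (1 - fps_X)) n = fps_nth (Sc EE) n"
  proof (cases n)
    case 0 then show ?thesis by (simp add: EE_def Sc_def algebra_simps)
  next
    case (Suc m)
    have "fps_nth (EE * (1 - fps_X)) n = 1 / qf (Suc m) - 1 / qf m"
      using Suc by (simp add: EE_def algebra_simps)
    also have "\<dots> = q ^ Suc m / qf (Suc m)"
      using qf_nz[of m] pow_ne1[of m] by (simp add: qf_Suc field_simps)
    finally show ?thesis using Suc by (simp add: EE_def Sc_def)
  qed
qed

lemma FF_eq: "FF * (1 + fps_X) = Sc FF"
proof (rule fps_ext)
  fix n show "fps_nth (FF * (1 + fps_X)) n = fps_nth (Sc FF) n"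
  proof (cases n)
    case 0 then show ?thesis by (simp add: FF_def Sc_def algebra_simps)
  next
    case (Suc m)
    have "fps_nth (FF * (1 + fps_X)) n = (-1) ^ Suc m / qf (Suc m) + (-1) ^ m / qf m"
      using Suc by (simp add: FF_def algebra_simps)
    also have "\<dots> = q ^ Suc m * ((-1) ^ Suc m / qf (Suc m))"
      using qf_nz[of m] pow_ne1[of m] by (simp add: qf_Suc field_simps)
    finally show ?thesis using Suc by (simp add: FF_def Sc_def)
  qed
qed

definition PP :: "complex fps" where "PP = EE * FF"

lemma PP_eq: "PP * (1 - fps_X ^ 2) = Sc PP"
proof -
  have "(1 - fps_X ^ 2 :: complex fps) = (1 - fps_X) * (1 + fps_X)"
    by (simp add: algebra_simps power2_eq_square)
  hence "PP * (1 - fps_X ^ 2) = (EE * (1 - fps_X)) * (FF * (1 + fps_X))"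
    by (simp add: PP_def mult_ac)
  also have "\<dots> = Sc PP" by (simp add: EE_eq FF_eq Sc_mult PP_def)
  finally show ?thesis .
qed

lemma PP_rec: "fps_nth PP (Suc (Suc N)) * (1 - q ^ Suc (Suc N)) = fps_nth PP N"
proof -
  have "fps_nth (PP * (1 - fps_X ^ 2)) (Suc (Suc N)) = fps_nth (Sc PP) (Suc (Suc N))"
    by (simp add: PP_eq)
  hence "fps_nth PP (Suc (Suc N)) - fps_nth PP N = q ^ Suc (Suc N) * fps_nth PP (Suc (Suc N))"
    by (simp add: Sc_def algebra_simps fps_X_power_mult_right_nth)
  thus ?thesis by (simp add: algebra_simps)
qed

lemma PP_0: "fps_nth PP 0 = 1"
  by (simp add: PP_def EE_def FF_def)

lemma PP_even: "fps_nth PP (2 * n) = 1 / qpoch (q^2) (q^2) n"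
proof (induction n)
  case 0 then show ?case by (simp add: PP_0)
next
  case (Suc n)
  have e: "2 * Suc n = Suc (Suc (2 * n))" by simp
  have nz: "1 - q ^ Suc (Suc (2 * n)) \<noteq> 0" using pow_ne1[of "Suc (2*n)"] by simp
  have "fps_nth PP (2 * Suc n) = fps_nth PP (2 * n) / (1 - q ^ Suc (Suc (2 * n)))"
    using PP_rec[of "2*n"] nz unfolding e by (simp add: field_simps)
  also have "\<dots> = 1 / qpoch (q^2) (q^2) (Suc n)"
    using Suc by (simp add: qpoch_Suc power_mult[symmetric] power_add[symmetric])
  finally show ?case .
qed

lemma PP_nth: "fps_nth PP N = (\<Sum>i=0..N. (-1) ^ (N - i) / (qf i * qf (N - i)))"
  by (simp add: PP_def EE_def FF_def fps_mult_nth)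

lemma tele:
  assumes "k \<le> n"
  shows "(\<Sum>r=k..n. (1 - q ^ (2 * r + 1)) * q ^ (r ^ 2) / (qf (n - r) * qf (n + r + 1)))
         = q ^ (k ^ 2) / (qf (n - k) * qf (n + k))"
  using assms
proof (induction "n - k" arbitrary: k)
  case 0
  hence k: "k = n" by simp
  have h: "qf (n + n + 1) = qf (n + n) * (1 - q ^ (2 * n + 1))"
    using qf_Suc[of "n + n"] by (simp add: mult_2)
  have nz1: "1 - q ^ (2 * n + 1) \<noteq> 0" using pow_ne1[of "2 * n"] by simp
  have nz2: "qf (n + n) \<noteq> 0" by (rule qf_nz)
  have "(1 - q ^ (2 * n + 1)) * q ^ (n ^ 2) / (qf 0 * qf (n + n + 1)) = q ^ (n ^ 2) / (qf 0 * qf (n + n))"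
    unfolding h using nz1 nz2 by (simp add: field_simps)
  thus ?case using k by (simp add: mult_2)
next
  case (Suc d)
  hence kn: "k < n" by simp
  have IH: "(\<Sum>r=Suc k..n. (1 - q ^ (2 * r + 1)) * q ^ (r ^ 2) / (qf (n - r) * qf (n + r + 1)))
         = q ^ ((Suc k) ^ 2) / (qf (n - Suc k) * qf (n + Suc k))"
    using Suc by simp
  obtain m where m: "n - k = Suc m" using kn by (metis Suc_diff_Suc)
  have nk1: "n - Suc k = m" using m by simp
  define A where "A = qf m"
  define B where "B = qf (n + k)"
  define a1 where "a1 = q ^ (2 * k + 1)"
  define b1 where "b1 = q ^ Suc m"
  define c1 where "c1 = q ^ (k ^ 2)"
  have ab: "a1 * b1 = q ^ Suc (n + k)"
    unfolding a1_def b1_def power_add[symmetric] using m kn by (intro arg_cong[where f="\<lambda>e. q ^ e"]) linarith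
  have qA: "qf (n - k) = A * (1 - b1)" unfolding A_def b1_def m by (rule qf_Suc)
  have qB: "qf (n + k + 1) = B * (1 - a1 * b1)" unfolding B_def ab using qf_Suc by simp
  have qB': "qf (n + Suc k) = B * (1 - a1 * b1)" using qB by simp
  have cs: "q ^ ((Suc k) ^ 2) = c1 * a1"
    unfolding c1_def a1_def power_add[symmetric] by (intro arg_cong[where f="\<lambda>e. q ^ e"]) (simp add: power2_eq_square algebra_simps)
  have nz4: "1 - a1 * b1 \<noteq> 0" unfolding ab using pow_ne1[of "n + k"] by simp
  have nz: "A \<noteq> 0" "B \<noteq> 0" "1 - b1 \<noteq> 0" "1 - a1 * b1 \<noteq> 0"
    using qf_nz pow_ne1 nz4 unfolding A_def B_def b1_def by auto
  have "(\<Sum>r=k..n. (1 - q ^ (2 * r + 1)) * q ^ (r ^ 2) / (qf (n - r) * qf (n + r + 1)))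
      = (1 - a1) * c1 / (qf (n - k) * qf (n + k + 1)) + q ^ ((Suc k) ^ 2) / (qf (n - Suc k) * qf (n + Suc k))"
  proof -
    have "(\<Sum>r=k..n. (1 - q ^ (2 * r + 1)) * q ^ (r ^ 2) / (qf (n - r) * qf (n + r + 1)))
       = (1 - q ^ (2 * k + 1)) * q ^ (k ^ 2) / (qf (n - k) * qf (n + k + 1))
         + (\<Sum>r=Suc k..n. (1 - q ^ (2 * r + 1)) * q ^ (r ^ 2) / (qf (n - r) * qf (n + r + 1)))"
      by (rule sum.atLeast_Suc_atMost) (use kn in simp)
    also have "\<dots> = (1 - a1) * c1 / (qf (n - k) * qf (n + k + 1)) + q ^ ((Suc k) ^ 2) / (qf (n - Suc k) * qf (n + Suc k))"
      by (simp only: IH a1_def c1_def)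
    finally show ?thesis .
  qed
  also have "\<dots> = (1 - a1) * c1 / (A * (1 - b1) * (B * (1 - a1 * b1))) + c1 * a1 / (A * (B * (1 - a1 * b1)))"
    unfolding qA qB qB' cs nk1 A_def ..
  also have "\<dots> = c1 / (A * (1 - b1) * B)"
    using nz apply (subst add_divide_eq_iff)
     apply simp
    apply (subst divide_eq_eq)
     apply simp
    apply (simp add: field_simps)
    done
  finally show ?case unfolding A_def B_def c1_def qA by (simp add: mult_ac)
qed

lemma Zsym:
  "(\<Sum>j\<in>{- int n..int n}. (-1) powi j / (qf (n - nat \<bar>j\<bar>) * qf (n + nat \<bar>j\<bar>)))
     = (-1) ^ n * fps_nth PP (2 * n)"
proof -
  have "(\<Sum>j\<in>{- int n..int n}. (-1) powi j / (qf (n - nat \<bar>j\<bar>) * qf (n + nat \<bar>j\<bar>)))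
      = (\<Sum>i\<in>{0..2*n}. (-1) ^ n * ((-1) ^ (2 * n - i) / (qf i * qf (2 * n - i))))"
  proof (rule sum.reindex_bij_witness[of _ "\<lambda>i. int i - int n" "\<lambda>j. nat (j + int n)"])
    fix a :: int assume a: "a \<in> {- int n..int n}"
    show "int (nat (a + int n)) - int n = a" using a by auto
    show "nat (a + int n) \<in> {0..2 * n}" using a by auto
    show "(-1) ^ n * ((-1) ^ (2 * n - nat (a + int n)) / (qf (nat (a + int n)) * qf (2 * n - nat (a + int n))))
        = (-1) powi a / (qf (n - nat \<bar>a\<bar>) * qf (n + nat \<bar>a\<bar>))"
    proof (cases "a \<ge> 0")
      case True
      then obtain k where k: "a = int k" by (metis nonneg_eq_int)
      have kn: "k \<le> n" using a k by auto
      have e1: "nat (a + int n) = n + k" using k by auto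
      have e2: "2 * n - (n + k) = n - k" by simp
      have ee: "n + (n - k) = 2 * (n - k) + k" using kn by simp
      have s: "(-1::complex) ^ n * (-1) ^ (n - k) = (-1) ^ k"
        unfolding power_add[symmetric] ee by (simp add: power_add power_mult)
      show ?thesis unfolding e1 e2 using k s by (simp add: mult_ac)
    next
      case False
      then obtain k where k: "a = - int k" by (metis nonpos_int_cases not_le order.strict_implies_order)
      have kn: "k \<le> n" using a k by auto
      have e1: "nat (a + int n) = n - k" using k kn by auto
      have e2: "2 * n - (n - k) = n + k" using kn by simp
      have ee: "n + (n + k) = 2 * n + k" by simp
      have s: "(-1::complex) ^ n * (-1) ^ (n + k) = (-1) ^ k"
        unfolding power_add[symmetric] ee by (simp add: power_add power_mult)
      have p: "(-1::complex) powi a = (-1) ^ k"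
        using k by (simp add: power_int_minus divide_inverse[symmetric] power_one_over[symmetric])
          (simp add: minus_one_power_iff)
      show ?thesis unfolding e1 e2 p using k s by (simp add: mult_ac)
    qed
  next
    fix b :: nat assume b: "b \<in> {0..2*n}"
    show "nat (int b - int n + int n) = b" by simp
    show "int b - int n \<in> {- int n..int n}" using b by auto
  qed
  also have "\<dots> = (-1) ^ n * (\<Sum>i=0..2*n. (-1) ^ (2 * n - i) / (qf i * qf (2 * n - i)))"
    by (simp add: sum_distrib_left)
  finally show ?thesis by (simp add: PP_nth)
qed

definition alpha :: "nat \<Rightarrow> complex" where
  "alpha r = (\<Sum>j\<in>{- int r..int r}. (-1) powi j * (1 - q ^ (2 * r + 1)) * q powi (int r ^ 2 - j ^ 2))"

lemma A1:
  "(\<Sum>r\<le>n. alpha r / (qf (n - r) * qf (n + r + 1))) = (-1) ^ n / qpoch (q^2) (q^2) n"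
proof -
  define g where "g r j = (-1) powi j * (1 - q ^ (2 * r + 1)) * q powi (int r ^ 2 - j ^ 2) / (qf (n - r) * qf (n + r + 1))" for r :: nat and j :: int
  have "(\<Sum>r\<le>n. alpha r / (qf (n - r) * qf (n + r + 1))) = (\<Sum>r\<in>{..n}. \<Sum>j\<in>{j \<in> {- int n..int n}. \<bar>j\<bar> \<le> int r}. g r j)"
  proof (rule sum.cong)
    fix r assume "r \<in> {..n}"
    hence "{j \<in> {- int n..int n}. \<bar>j\<bar> \<le> int r} = {- int r..int r}" by auto
    thus "alpha r / (qf (n - r) * qf (n + r + 1)) = (\<Sum>j\<in>{j \<in> {- int n..int n}. \<bar>j\<bar> \<le> int r}. g r j)"
      by (simp add: alpha_def g_def sum_divide_distrib)
  qed simp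
  also have "\<dots> = (\<Sum>j\<in>{- int n..int n}. \<Sum>r\<in>{r \<in> {..n}. \<bar>j\<bar> \<le> int r}. g r j)"
    by (rule sum.swap_restrict) auto
  also have "\<dots> = (\<Sum>j\<in>{- int n..int n}. (-1) powi j / (qf (n - nat \<bar>j\<bar>) * qf (n + nat \<bar>j\<bar>)))"
  proof (rule sum.cong)
    fix j assume j: "j \<in> {- int n..int n}"
    define k where "k = nat \<bar>j\<bar>"
    have kn: "k \<le> n" using j by (auto simp: k_def)
    have set: "{r \<in> {..n}. \<bar>j\<bar> \<le> int r} = {k..n}" by (auto simp: k_def)
    have j2: "j ^ 2 = int (k ^ 2)" by (simp add: k_def)
    have gr: "g r j = ((-1) powi j / q ^ (k ^ 2)) * ((1 - q ^ (2 * r + 1)) * q ^ (r ^ 2) / (qf (n - r) * qf (n + r + 1)))" for r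
    proof -
      have "q powi (int r ^ 2 - j ^ 2) = q ^ (r ^ 2) / q ^ (k ^ 2)"
        unfolding j2 of_nat_power[symmetric] using q0 by (simp add: power_int_diff del: of_nat_power)
      thus ?thesis unfolding g_def by simp
    qed
    have "(\<Sum>r\<in>{r \<in> {..n}. \<bar>j\<bar> \<le> int r}. g r j) = ((-1) powi j / q ^ (k ^ 2)) * (q ^ (k ^ 2) / (qf (n - k) * qf (n + k)))"
      unfolding set gr sum_distrib_left[symmetric] tele[OF kn] ..
    also have "\<dots> = (-1) powi j / (qf (n - k) * qf (n + k))" using q0 by simp
    finally show "(\<Sum>r\<in>{r \<in> {..n}. \<bar>j\<bar> \<le> int r}. g r j) = (-1) powi j / (qf (n - nat \<bar>j\<bar>) * qf (n + nat \<bar>j\<bar>))"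
      by (simp add: k_def)
  qed simp
  also have "\<dots> = (-1) ^ n / qpoch (q^2) (q^2) n"
    unfolding Zsym PP_even by simp
  finally show ?thesis .
qed

end

context qctx
begin

definition Cp :: "nat \<Rightarrow> complex \<Rightarrow> complex" where
  "Cp n x = (\<Prod>k<n. x - q ^ Suc k)"

lemma Cp_0 [simp]: "Cp 0 x = 1" by (simp add: Cp_def)
lemma Cp_Suc: "Cp (Suc n) x = Cp n x * (x - q ^ Suc n)" by (simp add: Cp_def)

lemma Cp_shift: "Cp (Suc m) (x * q) = q ^ Suc m * (x - 1) * Cp m x"
proof (induction m)
  case 0 then show ?case by (simp add: Cp_def algebra_simps)
next
  case (Suc m)
  have "Cp (Suc (Suc m)) (x * q) = Cp (Suc m) (x * q) * (x * q - q ^ Suc (Suc m))" by (rule Cp_Suc)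
  also have "x * q - q ^ Suc (Suc m) = q * (x - q ^ Suc m)" by (simp add: algebra_simps)
  also have "Cp (Suc m) (x * q) * (q * (x - q ^ Suc m)) = q ^ Suc m * (x - 1) * Cp m x * (q * (x - q ^ Suc m))"
    by (simp only: Suc)
  also have "\<dots> = q ^ Suc (Suc m) * (x - 1) * Cp (Suc m) x" by (simp add: Cp_Suc algebra_simps)
  finally show ?case .
qed

lemma Cp_q: "Cp (Suc n) q = 0"
  unfolding Cp_def by (intro prod_zero bexI[of _ 0]) auto

lemma prod_pow_tri: "(\<Prod>k<n. q ^ Suc k) = q ^ (n * (n + 1) div 2)"
proof (induction n)
  case 0 then show ?case by simp
next
  case (Suc n)
  have e: "Suc n * (Suc n + 1) div 2 = n * (n + 1) div 2 + Suc n"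
  proof -
    have "Suc n * (Suc n + 1) = n * (n + 1) + 2 * Suc n" by (simp add: algebra_simps)
    thus ?thesis by simp
  qed
  have "(\<Prod>k<Suc n. q ^ Suc k) = (\<Prod>k<n. q ^ Suc k) * q ^ Suc n" by simp
  also have "\<dots> = q ^ (n * (n + 1) div 2) * q ^ Suc n" by (simp only: Suc)
  also have "\<dots> = q ^ (Suc n * (Suc n + 1) div 2)" by (simp only: e power_add)
  finally show ?case .
qed

lemma prod_neg_Cp: "(\<Prod>k<m. q ^ Suc k - x) = (-1) ^ m * Cp m x"
  by (induction m) (simp_all add: Cp_def algebra_simps)

lemma q2_fac1: "1 - q^2 * (q^2) ^ k = (1 - q ^ Suc k) * (1 - (- q) * 1 * q ^ k)"
  by (simp add: algebra_simps power_mult[symmetric] power2_eq_square power_add[symmetric] mult_2)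

lemma q2_fac2: "1 - q^2 * (q^2) ^ k = (1 - q ^ Suc k) * (1 - q * (- 1) * q ^ k)"
  using q2_fac1[of k] by (simp add: algebra_simps)

lemma norm_q2_fac: "1 - norm q ^ (2 * k + 2) \<le> norm (1 - q^2 * (q^2) ^ k)"
proof -
  have "norm (q^2 * (q^2) ^ k) = norm q ^ (2 * k + 2)"
    by (simp add: norm_mult norm_power power_mult[symmetric] power_add[symmetric])
  thus ?thesis by (metis norm_one norm_triangle_ineq2)
qed

lemma nq_lt1: "norm q ^ Suc k < 1"
  by (rule power_Suc_less_one) (use q0 q1 in auto)

lemma q2_fac_pos: "0 < 1 - norm q ^ (2 * k + 2)"
  using nq_lt1[of "2 * k + 1"] by simp

lemma q2_fac_nz: "1 - q^2 * (q^2) ^ k \<noteq> 0"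
  using norm_q2_fac[of k] q2_fac_pos[of k] by auto

end

locale Bctx = qctx +
  fixes a :: complex
  assumes a1: "norm a < 1"
begin

abbreviation q2 :: "nat \<Rightarrow> complex" where "q2 n \<equiv> qpoch (q^2) (q^2) n"

lemma q2_nz: "q2 n \<noteq> 0"
  unfolding qpoch_def using q2_fac_nz by (simp add: prod_zero_iff)

lemma one_plus_a_nz: "1 + a * q ^ n \<noteq> 0"
proof
  assume "1 + a * q ^ n = 0"
  hence "a * q ^ n = -1" by (simp add: add_eq_0_iff)
  hence "norm (a * q ^ n) = 1" by simp
  moreover have "norm (a * q ^ n) \<le> norm a"
    using q1 by (simp add: norm_mult norm_power mult_left_le power_le_one)
  ultimately show False using a1 by simp
qed

definition lt :: "complex \<Rightarrow> nat \<Rightarrow> complex" where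
  "lt c n = Cp n c * q ^ (n * (n + 1) div 2) / (q2 n * (1 + a * q ^ n))"
definition Lc :: "complex \<Rightarrow> complex" where
  "Lc c = suminf (lt c)"
definition st :: "complex \<Rightarrow> nat \<Rightarrow> complex" where
  "st c n = Cp n a * Cp n c * (-1) ^ n / q2 n"
definition sg :: "complex \<Rightarrow> complex" where
  "sg c = suminf (st c)"

definition \<rho>L :: "nat \<Rightarrow> real" where
  "\<rho>L k = (1 + norm q ^ Suc k) * norm q ^ Suc k / (1 - norm q ^ (2 * k + 2))"
definition \<rho>S :: "nat \<Rightarrow> real" where
  "\<rho>S k = (norm a + norm q ^ Suc k) * (1 + norm q ^ Suc k) / (1 - norm q ^ (2 * k + 2))"

lemma lt_prod: "lt c n = (\<Prod>k<n. (c - q ^ Suc k) * q ^ Suc k / (1 - q^2 * (q^2) ^ k)) / (1 + a * q ^ n)"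
  unfolding lt_def Cp_def qpoch_def prod_pow_tri[symmetric]
  by (simp add: prod_dividef prod.distrib)

lemma st_prod: "st c n = (\<Prod>k<n. (a - q ^ Suc k) * (c - q ^ Suc k) * (-1) / (1 - q^2 * (q^2) ^ k))"
proof -
  have m: "(-1::complex) ^ n = (\<Prod>k<n. -1)" by simp
  show ?thesis
    unfolding st_def Cp_def qpoch_def m prod.distrib[symmetric] prod_dividef[symmetric] ..
qed

lemma tend_aux: "(\<lambda>k. norm q ^ Suc k) \<longlonglongrightarrow> 0" "(\<lambda>k. norm q ^ (2 * k + 2)) \<longlonglongrightarrow> 0"
proof -
  have z: "(\<lambda>k. norm q ^ k) \<longlonglongrightarrow> 0" using q1 by (intro LIMSEQ_power_zero) auto
  show "(\<lambda>k. norm q ^ Suc k) \<longlonglongrightarrow> 0" using LIMSEQ_Suc[OF z] by simp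
  have "norm q ^ 2 < 1" using q1 by (simp add: power_less_one_iff)
  hence "(\<lambda>k. (norm q ^ 2) ^ k) \<longlonglongrightarrow> 0" by (intro LIMSEQ_power_zero) auto
  hence "(\<lambda>k. (norm q ^ 2) ^ Suc k) \<longlonglongrightarrow> 0" by (rule LIMSEQ_Suc)
  moreover have "(norm q ^ 2) ^ Suc k = norm q ^ (2 * k + 2)" for k
    using power_mult[of "norm q" 2 "Suc k"] by simp
  ultimately show "(\<lambda>k. norm q ^ (2 * k + 2)) \<longlonglongrightarrow> 0" by simp
qed

lemma \<rho>L_nonneg: "0 \<le> \<rho>L k"
  unfolding \<rho>L_def using q2_fac_pos[of k] by simp

lemma summable_\<rho>L: "summable (\<lambda>n. \<Prod>k<n. \<rho>L k)"
proof (rule summable_prod_ratio)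
  show "0 \<le> \<rho>L k" for k unfolding \<rho>L_def using q2_fac_pos[of k] by simp
  have "\<rho>L \<longlonglongrightarrow> (1 + 0) * 0 / (1 - 0)"
    unfolding \<rho>L_def by (intro tendsto_intros tend_aux) auto
  thus "\<rho>L \<longlonglongrightarrow> 0" by simp
qed simp

lemma summable_\<rho>S: "summable (\<lambda>n. \<Prod>k<n. \<rho>S k)"
proof (rule summable_prod_ratio)
  show "0 \<le> \<rho>S k" for k unfolding \<rho>S_def using q2_fac_pos[of k] by simp
  have "\<rho>S \<longlonglongrightarrow> (norm a + 0) * (1 + 0) / (1 - 0)"
    unfolding \<rho>S_def by (intro tendsto_intros tend_aux) auto
  thus "\<rho>S \<longlonglongrightarrow> norm a" by simp
qed (rule a1)

lemma lt_bound:
  assumes "norm c \<le> 1"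
  shows "norm (lt c n) \<le> (\<Prod>k<n. \<rho>L k) / (1 - norm a)"
proof -
  have f: "norm ((c - q ^ Suc k) * q ^ Suc k / (1 - q^2 * (q^2) ^ k)) \<le> \<rho>L k" for k
  proof -
    have "norm (c - q ^ Suc k) \<le> 1 + norm q ^ Suc k"
      using assms by (metis add_mono norm_power norm_triangle_ineq4 order_trans order_refl)
    hence "norm ((c - q ^ Suc k) * q ^ Suc k) \<le> (1 + norm q ^ Suc k) * norm q ^ Suc k"
      by (simp add: norm_mult norm_power mult_right_mono)
    thus ?thesis unfolding \<rho>L_def norm_divide
      using norm_q2_fac[of k] q2_fac_pos[of k] by (intro frac_le) auto
  qed
  have "norm (\<Prod>k<n. (c - q ^ Suc k) * q ^ Suc k / (1 - q^2 * (q^2) ^ k)) \<le> (\<Prod>k<n. \<rho>L k)"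
    unfolding prod_norm[symmetric] by (intro prod_mono) (use f in auto)
  moreover have "1 - norm a \<le> norm (1 + a * q ^ n)"
  proof -
    have "norm (a * q ^ n) \<le> norm a"
      using q1 by (simp add: norm_mult norm_power mult_left_le power_le_one)
    moreover have "1 - norm (a * q ^ n) \<le> norm (1 + a * q ^ n)"
      by (metis norm_minus_cancel norm_one norm_triangle_ineq2 diff_minus_eq_add)
    ultimately show ?thesis by simp
  qed
  moreover have "0 < 1 - norm a" using a1 by simp
  moreover have "0 \<le> (\<Prod>k<n. \<rho>L k)" by (intro prod_nonneg) (use \<rho>L_nonneg in auto)
  ultimately show ?thesis unfolding lt_prod norm_divide
    by (intro frac_le) auto
qed

lemma st_bound:
  assumes "norm c \<le> 1"
  shows "norm (st c n) \<le> (\<Prod>k<n. \<rho>S k)"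
proof -
  have f: "norm ((a - q ^ Suc k) * (c - q ^ Suc k) * (-1) / (1 - q^2 * (q^2) ^ k)) \<le> \<rho>S k" for k
  proof -
    have h1: "norm (a - q ^ Suc k) \<le> norm a + norm q ^ Suc k"
      by (metis norm_power norm_triangle_ineq4)
    have h2: "norm (c - q ^ Suc k) \<le> 1 + norm q ^ Suc k"
      using assms by (metis add_mono norm_power norm_triangle_ineq4 order_trans order_refl)
    have "norm (a - q ^ Suc k) * norm (c - q ^ Suc k) \<le> (norm a + norm q ^ Suc k) * (1 + norm q ^ Suc k)"
      by (rule mult_mono[OF h1 h2]) auto
    hence "norm ((a - q ^ Suc k) * (c - q ^ Suc k) * (-1)) \<le> (norm a + norm q ^ Suc k) * (1 + norm q ^ Suc k)"
      by (simp add: norm_mult)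
    thus ?thesis unfolding \<rho>S_def norm_divide
      using norm_q2_fac[of k] q2_fac_pos[of k] by (intro frac_le) auto
  qed
  show ?thesis unfolding st_prod prod_norm[symmetric] by (intro prod_mono) (use f in auto)
qed

lemma summable_lt: "norm c \<le> 1 \<Longrightarrow> summable (lt c)"
  by (rule summable_comparison_test'[OF summable_divide[OF summable_\<rho>L]]) (use lt_bound in auto)

lemma summable_st: "norm c \<le> 1 \<Longrightarrow> summable (st c)"
  by (rule summable_comparison_test'[OF summable_\<rho>S]) (use st_bound in auto)

lemma Lc_lim:
  assumes "norm c \<le> 1"
  shows "(\<lambda>n. Lc (c * q ^ n)) \<longlonglongrightarrow> Lc 0"
proof -
  have qz: "(\<lambda>n. c * q ^ n) \<longlonglongrightarrow> 0"
    using tendsto_mult[OF tendsto_const LIMSEQ_power_zero[OF q1], of c] by simp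
  have lim: "(\<lambda>n. lt (c * q ^ n) k) \<longlonglongrightarrow> lt 0 k" for k
  proof -
    have "(\<lambda>n. Cp k (c * q ^ n)) \<longlonglongrightarrow> Cp k 0"
      unfolding Cp_def by (intro tendsto_prod tendsto_diff qz tendsto_const)
    thus ?thesis unfolding lt_def by (intro tendsto_intros) (use q2_nz one_plus_a_nz in auto)
  qed
  have nn: "norm (c * q ^ n) \<le> 1" for n
    using assms q1 by (simp add: norm_mult norm_power mult_le_one power_le_one)
  have "eventually (\<lambda>(k, n). norm (lt (c * q ^ n) k) \<le> (\<Prod>i<k. \<rho>L i) / (1 - norm a)) (at_top \<times>\<^sub>F sequentially)"
    by (intro always_eventually) (auto intro!: lt_bound nn)
  from tannerys_theorem[OF lim this summable_divide[OF summable_\<rho>L]]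
  show ?thesis unfolding Lc_def by simp
qed

lemma sg_lim:
  assumes "norm c \<le> 1"
  shows "(\<lambda>n. sg (c * q ^ n)) \<longlonglongrightarrow> sg 0"
proof -
  have qz: "(\<lambda>n. c * q ^ n) \<longlonglongrightarrow> 0"
    using tendsto_mult[OF tendsto_const LIMSEQ_power_zero[OF q1], of c] by simp
  have lim: "(\<lambda>n. st (c * q ^ n) k) \<longlonglongrightarrow> st 0 k" for k
  proof -
    have "(\<lambda>n. Cp k (c * q ^ n)) \<longlonglongrightarrow> Cp k 0"
      unfolding Cp_def by (intro tendsto_prod tendsto_diff qz tendsto_const)
    thus ?thesis unfolding st_def by (intro tendsto_intros) (use q2_nz in auto)
  qed
  have nn: "norm (c * q ^ n) \<le> 1" for n
    using assms q1 by (simp add: norm_mult norm_power mult_le_one power_le_one)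
  have "eventually (\<lambda>(k, n). norm (st (c * q ^ n) k) \<le> (\<Prod>i<k. \<rho>S i)) (at_top \<times>\<^sub>F sequentially)"
    by (intro always_eventually) (auto intro!: st_bound nn)
  from tannerys_theorem[OF lim this summable_\<rho>S]
  show ?thesis unfolding sg_def by simp
qed

lemma gaussM: "norm c < 1 \<Longrightarrow> gauss q c (- q) 1"
  unfolding gauss_def gauss_axioms_def qctx_def using q0 q1 by simp

lemma gauss2: "norm c < 1 \<Longrightarrow> gauss q (- c) q (- 1)"
  unfolding gauss_def gauss_axioms_def qctx_def using q0 q1 by simp

lemma qpoch_inf_0: "qpoch_inf 0 q = 1"
  unfolding qpoch_inf_def by simp

lemma mt_eq:
  assumes c: "norm c < 1"
  shows "gauss.gt q c (- q) 1 0 n = q ^ (n * (n + 1) div 2) * (\<Prod>k<n. c - q ^ k) / q2 n"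
proof -
  note G = gaussM[OF c]
  have "gauss.gt q c (- q) 1 0 n = gauss.gP q (- q) 0 n * gauss.gQ q c 1 n / gauss.gD q (- q) 1 n"
    by (simp add: gauss.gt_def[OF G])
  also have "gauss.gP q (- q) 0 n = (\<Prod>k<n. q ^ Suc k)"
    by (simp add: gauss.gP_def[OF G])
  also have "gauss.gQ q c 1 n = (\<Prod>k<n. c - q ^ k)"
    by (simp add: gauss.gQ_def[OF G])
  also have "gauss.gD q (- q) 1 n = q2 n"
    unfolding gauss.gD_def[OF G] qpoch_def using q2_fac1 by simp
  finally show ?thesis by (simp only: prod_pow_tri)
qed

lemma g2t_eq:
  assumes c: "norm c < 1"
  shows "gauss.gt q (- c) q (- 1) a n = Cp n a * (\<Prod>k<n. q ^ k - c) / q2 n"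
proof -
  note G = gauss2[OF c]
  have "gauss.gt q (- c) q (- 1) a n = gauss.gP q q a n * gauss.gQ q (- c) (- 1) n / gauss.gD q q (- 1) n"
    by (simp add: gauss.gt_def[OF G])
  also have "gauss.gP q q a n = Cp n a"
    by (simp add: gauss.gP_def[OF G] Cp_def)
  also have "gauss.gQ q (- c) (- 1) n = (\<Prod>k<n. q ^ k - c)"
    by (simp add: gauss.gQ_def[OF G])
  also have "gauss.gD q q (- 1) n = q2 n"
    unfolding gauss.gD_def[OF G] qpoch_def using q2_fac2 by simp
  finally show ?thesis .
qed

lemma lt_term:
  assumes c: "norm c < 1"
  shows "(1 - c) * lt c n - (1 + a * c) * lt (c * q) n = - c * gauss.gt q c (- q) 1 0 n"
proof (cases n)
  case 0
  have nz: "1 + a \<noteq> 0" using one_plus_a_nz[of 0] by simp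
  have "(1 - c) * (1 / (1 + a)) - (1 + a * c) * (1 / (1 + a)) = - c * 1"
  proof -
    have "(1 - c) * (1 / (1 + a)) - (1 + a * c) * (1 / (1 + a)) = ((1 - c) - (1 + a * c)) * (1 / (1 + a))"
      by (simp only: left_diff_distrib)
    also have "(1 - c) - (1 + a * c) = - c * (1 + a)" by (simp add: algebra_simps)
    finally show ?thesis using nz by simp
  qed
  then show ?thesis using 0 by (simp add: lt_def mt_eq[OF c])
next
  case (Suc m)
  define T where "T = q ^ (Suc m * (Suc m + 1) div 2)"
  define Q where "Q = q2 (Suc m)"
  define w where "w = q ^ Suc m"
  define E where "E = 1 + a * w"
  define K where "K = Cp m c"
  have nz: "Q \<noteq> 0" "E \<noteq> 0" using q2_nz one_plus_a_nz[of "Suc m"] unfolding Q_def E_def w_def by auto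
  have e1: "lt c (Suc m) = K * (c - w) * T / (Q * E)"
    by (simp add: lt_def Cp_Suc K_def T_def Q_def E_def w_def)
  have e2: "lt (c * q) (Suc m) = w * (c - 1) * K * T / (Q * E)"
    by (simp add: lt_def Cp_shift K_def T_def Q_def E_def w_def)
  have e3: "gauss.gt q c (- q) 1 0 (Suc m) = T * ((c - 1) * K) / Q"
    unfolding mt_eq[OF c] prod.lessThan_Suc_shift T_def Q_def K_def Cp_def by simp
  have "(1 - c) * (K * (c - w) * T / (Q * E)) - (1 + a * c) * (w * (c - 1) * K * T / (Q * E))
      = - c * (T * ((c - 1) * K) / Q)"
  proof -
    have br: "(1 - c) * (c - w) - (1 + a * c) * (w * (c - 1)) = c * (1 - c) * E"
      by (simp add: E_def algebra_simps)
    have "(1 - c) * (K * (c - w) * T / (Q * E)) - (1 + a * c) * (w * (c - 1) * K * T / (Q * E))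
        = K * T * ((1 - c) * (c - w) - (1 + a * c) * (w * (c - 1))) / (Q * E)"
      using nz by (simp add: field_simps)
    also have "\<dots> = K * T * (c * (1 - c) * E) / (Q * E)" by (simp only: br)
    also have "\<dots> = - c * (T * ((c - 1) * K) / Q)" using nz by (simp add: field_simps)
    finally show ?thesis .
  qed
  thus ?thesis unfolding Suc e1 e2 e3 .
qed

lemma st_term:
  assumes c: "norm c < 1"
  shows "(1 - c) * st c n - st (c * q) n = - c * gauss.gt q (- c) q (- 1) a n"
proof (cases n)
  case 0
  then show ?thesis by (simp add: st_def g2t_eq[OF c] field_simps)
next
  case (Suc m)
  define Q where "Q = q2 (Suc m)"
  define w where "w = q ^ Suc m"
  define A where "A = Cp (Suc m) a"
  define K where "K = Cp m c"
  define s where "s = (-1::complex) ^ m"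
  have nz: "Q \<noteq> 0" using q2_nz by (auto simp: Q_def)
  have e1: "st c (Suc m) = A * (K * (c - w)) * (- s) / Q"
    by (simp add: st_def Cp_Suc K_def Q_def w_def A_def s_def)
  have e2: "st (c * q) (Suc m) = A * (w * (c - 1) * K) * (- s) / Q"
    by (simp add: st_def Cp_shift K_def Q_def w_def A_def s_def)
  have pr: "(\<Prod>k<Suc m. q ^ k - c) = (1 - c) * (s * K)"
    unfolding prod.lessThan_Suc_shift s_def K_def prod_neg_Cp by simp
  have e3: "gauss.gt q (- c) q (- 1) a (Suc m) = A * ((1 - c) * (s * K)) / Q"
    unfolding g2t_eq[OF c] pr by (simp add: A_def Q_def)
  have "(1 - c) * (A * (K * (c - w)) * (- s) / Q) - A * (w * (c - 1) * K) * (- s) / Q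
      = - c * (A * ((1 - c) * (s * K)) / Q)"
    using nz by (simp add: field_simps)
  thus ?thesis unfolding Suc e1 e2 e3 .
qed

lemma norm_cq: "norm c \<le> 1 \<Longrightarrow> norm (c * q ^ n) \<le> 1"
  using q1 by (simp add: norm_mult norm_power mult_le_one power_le_one)

lemma Lc_feq:
  assumes c: "norm c < 1"
  shows "(1 - c) * Lc c - (1 + a * c) * Lc (c * q) = - c * gauss.G q c (- q) 1 0"
proof -
  note G = gaussM[OF c]
  have c1: "norm c \<le> 1" "norm (c * q) \<le> 1" using c norm_cq[of c 1] by auto
  have s1: "lt c sums Lc c" unfolding Lc_def using summable_lt[OF c1(1)] by (rule summable_sums)
  have s2: "lt (c * q) sums Lc (c * q)" unfolding Lc_def using summable_lt[OF c1(2)] by (rule summable_sums)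
  have "(\<lambda>n. (1 - c) * lt c n - (1 + a * c) * lt (c * q) n) sums ((1 - c) * Lc c - (1 + a * c) * Lc (c * q))"
    by (intro sums_diff sums_mult s1 s2)
  hence A: "(\<lambda>n. - c * gauss.gt q c (- q) 1 0 n) sums ((1 - c) * Lc c - (1 + a * c) * Lc (c * q))"
    unfolding lt_term[OF c] .
  have "gauss.gt q c (- q) 1 0 sums gauss.G q c (- q) 1 0"
    unfolding gauss.G_def[OF G] by (rule summable_sums) (rule gauss.summable_gt[OF G], simp)
  hence B: "(\<lambda>n. - c * gauss.gt q c (- q) 1 0 n) sums (- c * gauss.G q c (- q) 1 0)"
    by (rule sums_mult)
  show ?thesis using sums_unique2[OF A B] .
qed

lemma sg_feq:
  assumes c: "norm c < 1"
  shows "(1 - c) * sg c - sg (c * q) = - c * gauss.G q (- c) q (- 1) a"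
proof -
  note G = gauss2[OF c]
  have c1: "norm c \<le> 1" "norm (c * q) \<le> 1" using c norm_cq[of c 1] by auto
  have s1: "st c sums sg c" unfolding sg_def using summable_st[OF c1(1)] by (rule summable_sums)
  have s2: "st (c * q) sums sg (c * q)" unfolding sg_def using summable_st[OF c1(2)] by (rule summable_sums)
  have "(\<lambda>n. (1 - c) * st c n - st (c * q) n) sums ((1 - c) * sg c - sg (c * q))"
    by (intro sums_diff sums_mult s1 s2)
  hence A: "(\<lambda>n. - c * gauss.gt q (- c) q (- 1) a n) sums ((1 - c) * sg c - sg (c * q))"
    unfolding st_term[OF c] .
  have "gauss.gt q (- c) q (- 1) a sums gauss.G q (- c) q (- 1) a"
    unfolding gauss.G_def[OF G] by (rule summable_sums) (rule gauss.summable_gt[OF G], use a1 in simp)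
  hence B: "(\<lambda>n. - c * gauss.gt q (- c) q (- 1) a n) sums (- c * gauss.G q (- c) q (- 1) a)"
    by (rule sums_mult)
  show ?thesis using sums_unique2[OF A B] .
qed

lemma Mval:
  assumes c: "norm c < 1"
  shows "gauss.G q c (- q) 1 0 * qpoch_inf (- q) q = qpoch_inf (- (q * c)) q"
  using gauss.qgauss[OF gaussM[OF c], of 0] by (simp add: qpoch_inf_0)

lemma G2val:
  assumes c: "norm c < 1"
  shows "gauss.G q (- c) q (- 1) a * qpoch_inf (- (a * c)) q * qpoch_inf (- q) q
         = qpoch_inf (- a) q * qpoch_inf (- (q * c)) q"
  using gauss.qgauss[OF gauss2[OF c], of a] a1 by simp

definition DD :: "complex \<Rightarrow> complex" where
  "DD c = qpoch_inf (- a) q * Lc c - qpoch_inf (- (a * c)) q * sg c"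

lemma Pq_nz: "qpoch_inf (- q) q \<noteq> 0"
  by (rule qpoch_inf_nonzero') (use q1 in simp)

lemma DD_feq:
  assumes c: "norm c < 1"
  shows "(1 - c) * DD c = (1 + a * c) * DD (c * q)"
proof -
  define P where "P = qpoch_inf (- q) q"
  define A where "A = qpoch_inf (- a) q"
  define B where "B = qpoch_inf (- (a * c)) q"
  define B' where "B' = qpoch_inf (- (a * (c * q))) q"
  define R where "R = qpoch_inf (- (q * c)) q"
  have P: "P \<noteq> 0" using Pq_nz by (simp add: P_def)
  have BB: "B = (1 + a * c) * B'"
    unfolding B_def B'_def using qpoch_inf_step[of "- (a * c)"] by (simp add: mult_ac)
  have X: "P * ((1 - c) * (A * Lc c) - (1 + a * c) * (A * Lc (c * q))) = - c * (A * R)"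
  proof -
    have "(1 - c) * (A * Lc c) - (1 + a * c) * (A * Lc (c * q)) = A * ((1 - c) * Lc c - (1 + a * c) * Lc (c * q))"
      by (simp add: algebra_simps)
    also have "\<dots> = A * (- c * gauss.G q c (- q) 1 0)" unfolding Lc_feq[OF c] ..
    finally have h: "(1 - c) * (A * Lc c) - (1 + a * c) * (A * Lc (c * q)) = A * (- c * gauss.G q c (- q) 1 0)" .
    show ?thesis unfolding h P_def R_def Mval[OF c, symmetric] by (simp add: algebra_simps)
  qed
  have Y: "P * ((1 - c) * (B * sg c) - (1 + a * c) * (B' * sg (c * q))) = - c * (A * R)"
  proof -
    have "(1 - c) * (B * sg c) - (1 + a * c) * (B' * sg (c * q)) = B * ((1 - c) * sg c - sg (c * q))"
      unfolding BB by (simp add: algebra_simps)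
    also have "\<dots> = B * (- c * gauss.G q (- c) q (- 1) a)" unfolding sg_feq[OF c] ..
    finally have h: "(1 - c) * (B * sg c) - (1 + a * c) * (B' * sg (c * q)) = B * (- c * gauss.G q (- c) q (- 1) a)" .
    show ?thesis unfolding h
      by (simp only: P_def R_def A_def B_def G2val[OF c, symmetric]) (simp add: algebra_simps)
  qed
  have "P * ((1 - c) * DD c - (1 + a * c) * DD (c * q))
      = P * ((1 - c) * (A * Lc c) - (1 + a * c) * (A * Lc (c * q)))
        - P * ((1 - c) * (B * sg c) - (1 + a * c) * (B' * sg (c * q)))"
    unfolding DD_def A_def B_def B'_def by (simp add: algebra_simps)
  also have "\<dots> = 0" unfolding X Y by simp
  finally have "P * ((1 - c) * DD c - (1 + a * c) * DD (c * q)) = 0" .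
  thus ?thesis using P by simp
qed

lemma DD_iter:
  assumes c: "norm c < 1"
  shows "DD c * qpoch c q n = qpoch (- (a * c)) q n * DD (c * q ^ n)"
proof (induction n)
  case 0 then show ?case by simp
next
  case (Suc n)
  have "norm (c * q ^ n) \<le> norm c"
    using q1 by (simp add: norm_mult norm_power mult_left_le power_le_one)
  hence cn: "norm (c * q ^ n) < 1" using c by simp
  have f: "(1 - c * q ^ n) * DD (c * q ^ n) = (1 + a * (c * q ^ n)) * DD (c * q ^ n * q)"
    by (rule DD_feq[OF cn])
  have "DD c * qpoch c q (Suc n) = (DD c * qpoch c q n) * (1 - c * q ^ n)"
    by (simp add: qpoch_Suc)
  also have "\<dots> = qpoch (- (a * c)) q n * ((1 - c * q ^ n) * DD (c * q ^ n))"
    unfolding Suc by (simp add: algebra_simps)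
  also have "\<dots> = qpoch (- (a * c)) q n * ((1 + a * (c * q ^ n)) * DD (c * q ^ n * q))"
    unfolding f ..
  also have "\<dots> = qpoch (- (a * c)) q (Suc n) * DD (c * q ^ Suc n)"
    by (simp add: qpoch_Suc algebra_simps)
  finally show ?case .
qed

lemma DD_lim:
  assumes c: "norm c < 1"
  shows "(\<lambda>n. DD (c * q ^ n)) \<longlonglongrightarrow> DD 0"
proof -
  have "norm a * norm c \<le> norm a" using c by (intro mult_left_le) auto
  hence ac: "norm (- (a * c)) < 1" using a1 by (simp add: norm_mult)
  have t: "(\<lambda>n. qpoch_inf (- (a * c) * q ^ n) q) \<longlonglongrightarrow> 1"
    by (rule qpoch_inf_tail_lim[OF qpoch_inf_nonzero'[OF ac]])
  have e: "qpoch_inf (- (a * (c * q ^ n))) q = qpoch_inf (- (a * c) * q ^ n) q" for n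
    by (simp add: mult_ac)
  have "(\<lambda>n. qpoch_inf (- a) q * Lc (c * q ^ n) - qpoch_inf (- (a * c) * q ^ n) q * sg (c * q ^ n))
        \<longlonglongrightarrow> qpoch_inf (- a) q * Lc 0 - 1 * sg 0"
    using c by (intro tendsto_intros Lc_lim sg_lim t) auto
  thus ?thesis unfolding DD_def e by (simp add: qpoch_inf_0)
qed

lemma Lc_q: "Lc q = 1 / (1 + a)"
proof -
  have "lt q = (\<lambda>n. if n = 0 then 1 / (1 + a) else 0)"
  proof
    fix n show "lt q n = (if n = 0 then 1 / (1 + a) else 0)"
      by (cases n) (simp_all add: lt_def Cp_q)
  qed
  moreover have "(\<lambda>n::nat. if n = 0 then 1 / (1 + a) else 0) sums (1 / (1 + a))"
    using sums_single[of 0 "\<lambda>_. 1 / (1 + a)"] by simp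
  ultimately show ?thesis unfolding Lc_def by (simp add: sums_iff)
qed

lemma sg_q: "sg q = 1"
proof -
  have "st q = (\<lambda>n. if n = 0 then 1 else 0)"
  proof
    fix n show "st q n = (if n = 0 then 1 else 0)"
      by (cases n) (simp_all add: st_def Cp_q)
  qed
  moreover have "(\<lambda>n::nat. if n = 0 then (1::complex) else 0) sums 1"
    using sums_single[of 0 "\<lambda>_. 1::complex"] by simp
  ultimately show ?thesis unfolding sg_def by (simp add: sums_iff)
qed

theorem thmB:
  assumes c: "norm c < 1"
  shows "qpoch_inf (- a) q * Lc c = qpoch_inf (- (a * c)) q * sg c"
proof -
  have main: "DD z * qpoch_inf z q = qpoch_inf (- (a * z)) q * DD 0" if z: "norm z < 1" for z
  proof -
    have "(\<lambda>n. DD z * qpoch z q n) \<longlonglongrightarrow> DD z * qpoch_inf z q"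
      by (intro tendsto_intros qpoch_lim)
    moreover have "(\<lambda>n. DD z * qpoch z q n) \<longlonglongrightarrow> qpoch_inf (- (a * z)) q * DD 0"
      unfolding DD_iter[OF z] by (intro tendsto_intros qpoch_lim DD_lim z)
    ultimately show ?thesis using LIMSEQ_unique by blast
  qed
  have "1 + a \<noteq> 0" using one_plus_a_nz[of 0] by simp
  hence Dq: "DD q = 0"
    unfolding DD_def Lc_q sg_q using qpoch_inf_step[of "- a"] by (simp add: mult_ac)
  have "norm a * norm q \<le> norm a" using q1 by (intro mult_left_le) auto
  hence naq: "norm (- (a * q)) < 1" using a1 by (simp add: norm_mult)
  have "DD 0 = 0"
    using main[of q] q1 Dq qpoch_inf_nonzero'[OF naq] by simp
  hence "DD c * qpoch_inf c q = 0" using main[OF c] by simp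
  hence "DD c = 0" using qpoch_inf_nonzero'[OF c] by simp
  thus ?thesis unfolding DD_def by simp
qed

end

lemma prod_lower:
  fixes r :: real
  assumes r0: "0 \<le> r" and r1: "r < 1"
  shows "\<exists>\<kappa>>0. \<forall>j. \<kappa> \<le> (\<Prod>k<j. 1 - r ^ Suc k)"
proof -
  define f where "f k = 1 - r ^ Suc k" for k
  have fpos: "0 < f k" for k
  proof -
    have "r * r ^ k \<le> r" using mult_left_le[of "r ^ k" r] power_le_one[of r k] r0 r1 by auto
    thus ?thesis unfolding f_def using r1 by simp
  qed
  have fle: "f k \<le> 1" for k unfolding f_def using r0 by simp
  have "summable (\<lambda>k. r * r ^ k)" using r0 r1 by (intro summable_mult summable_geometric) auto
  hence "summable (\<lambda>k. norm (f k - 1))" unfolding f_def using r0 by simp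
  hence cp: "convergent_prod f"
    by (intro abs_convergent_prod_imp_convergent_prod summable_imp_abs_convergent_prod)
  have "(\<lambda>n. \<Prod>k\<le>n. f k) \<longlonglongrightarrow> prodinf f" by (rule convergent_prod_LIMSEQ[OF cp])
  hence "(\<lambda>n. \<Prod>k<Suc n. f k) \<longlonglongrightarrow> prodinf f" by (simp add: lessThan_Suc_atMost)
  hence lim: "(\<lambda>n. \<Prod>k<n. f k) \<longlonglongrightarrow> prodinf f" by (rule LIMSEQ_imp_Suc)
  have dec: "decseq (\<lambda>n. \<Prod>k<n. f k)"
  proof (rule decseq_SucI)
    fix n
    have "0 \<le> (\<Prod>k<n. f k)" using fpos by (intro prod_nonneg) (auto intro: less_imp_le)
    thus "(\<Prod>k<Suc n. f k) \<le> (\<Prod>k<n. f k)" using fle[of n] by (simp add: mult_left_le)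
  qed
  have "f i \<noteq> 0" for i using fpos[of i] by simp
  hence nz: "prodinf f \<noteq> 0" by (intro prodinf_nonzero[OF cp])
  have ge: "0 \<le> prodinf f"
  proof (rule LIMSEQ_le_const[OF lim])
    show "\<exists>N. \<forall>n\<ge>N. 0 \<le> (\<Prod>k<n. f k)"
      using fpos by (intro exI[of _ 0] allI impI prod_nonneg) (auto intro: less_imp_le)
  qed
  have "prodinf f \<le> (\<Prod>k<j. f k)" for j using decseq_ge[OF dec lim] .
  moreover have "0 < prodinf f" using nz ge by simp
  ultimately show ?thesis by (intro exI[of _ "prodinf f"]) (auto simp: f_def)
qed

lemma rat_lim: "(\<lambda>k::nat. ((real k + 2) * (2 * real k + 3)) / ((real k + 1) * (2 * real k + 1))) \<longlonglongrightarrow> 1"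
  by real_asymp

lemma rat_prod: "(\<Prod>k<n. ((real k + 2) * (2 * real k + 3)) / ((real k + 1) * (2 * real k + 1))) = (real n + 1) * (2 * real n + 1)"
proof (induction n)
  case 0 then show ?case by simp
next
  case (Suc n)
  have nz: "(real n + 1) * (2 * real n + 1) \<noteq> 0" by (simp add: add_nonneg_eq_0_iff)
  have "(real n + 1) * (2 * real n + 1) * (((real n + 2) * (2 * real n + 3)) / ((real n + 1) * (2 * real n + 1)))
        = (real n + 2) * (2 * real n + 3)"
    using nz by (simp only: times_divide_eq_right nonzero_mult_div_cancel_left mult.assoc[symmetric]) (simp add: mult.assoc)
  thus ?case using Suc by (simp add: algebra_simps)
qed

locale Actx = Bctx +
  fixes c :: complex
  assumes c1: "norm c < 1"
begin

definition Ff :: "nat \<Rightarrow> nat \<Rightarrow> complex" where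
  "Ff n r = Cp n a * Cp n c * alpha r / (qf (n - r) * qf (n + r + 1))"

lemma st_as_sum: "st c n = (\<Sum>r\<le>n. Ff n r)"
proof -
  have "st c n = Cp n a * Cp n c * ((-1) ^ n / q2 n)" by (simp add: st_def)
  also have "\<dots> = Cp n a * Cp n c * (\<Sum>r\<le>n. alpha r / (qf (n - r) * qf (n + r + 1)))"
    by (simp only: A1)
  also have "\<dots> = (\<Sum>r\<le>n. Ff n r)" by (simp add: Ff_def sum_distrib_left)
  finally show ?thesis .
qed

lemma Cp_norm: "norm (Cp n x) \<le> (\<Prod>k<n. norm x + norm q ^ Suc k)"
proof -
  have "norm (x - q ^ Suc k) \<le> norm x + norm q ^ Suc k" for k
    by (metis norm_power norm_triangle_ineq4)
  hence "(\<Prod>k<n. norm (x - q ^ Suc k)) \<le> (\<Prod>k<n. norm x + norm q ^ Suc k)"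
    by (intro prod_mono) auto
  thus ?thesis unfolding Cp_def prod_norm[symmetric] .
qed

lemma alpha_bound: "norm (alpha r) \<le> 2 * (2 * real r + 1)"
proof -
  have t: "norm ((-1) powi j * (1 - q ^ (2 * r + 1)) * q powi (int r ^ 2 - j ^ 2)) \<le> 2"
    if j: "j \<in> {- int r..int r}" for j
  proof -
    have "\<bar>j\<bar> \<le> int r" using j by auto
    hence "\<bar>j\<bar> ^ 2 \<le> (int r) ^ 2" by (intro power_mono) auto
    hence e: "0 \<le> int r ^ 2 - j ^ 2" by simp
    have n1: "norm (q powi (int r ^ 2 - j ^ 2)) \<le> 1"
      using e q1 by (simp add: power_int_def norm_power power_le_one)
    have n2: "norm ((-1::complex) powi j) = 1" by (simp add: norm_power_int)
    have n3: "norm (1 - q ^ (2 * r + 1)) \<le> 2"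
    proof -
      have "norm (1 - q ^ (2 * r + 1)) \<le> 1 + norm q ^ (2 * r + 1)"
        by (metis norm_one norm_power norm_triangle_ineq4)
      also have "\<dots> \<le> 1 + 1"
      proof -
        have "norm q ^ (2 * r + 1) \<le> 1" by (rule power_le_one) (use q1 in auto)
        thus ?thesis by linarith
      qed
      finally show ?thesis by simp
    qed
    have "norm ((-1) powi j * (1 - q ^ (2 * r + 1)) * q powi (int r ^ 2 - j ^ 2))
        = norm (1 - q ^ (2 * r + 1)) * norm (q powi (int r ^ 2 - j ^ 2))"
      by (simp add: norm_mult n2)
    also have "\<dots> \<le> 2 * 1" by (intro mult_mono n1 n3) auto
    finally show ?thesis by simp
  qed
  have "norm (alpha r) \<le> (\<Sum>j\<in>{- int r..int r}. norm ((-1) powi j * (1 - q ^ (2 * r + 1)) * q powi (int r ^ 2 - j ^ 2)))"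
    unfolding alpha_def by (rule norm_sum)
  also have "\<dots> \<le> (\<Sum>j\<in>{- int r..int r}. 2)" by (intro sum_mono t)
  also have "\<dots> = 2 * (2 * real r + 1)" by simp
  finally show ?thesis .
qed

lemma kappa_ex: "\<exists>\<kappa>>0. \<forall>j. \<kappa> \<le> norm (qf j)"
proof -
  obtain \<kappa> where k0: "\<kappa> > 0" and k: "\<And>j. \<kappa> \<le> (\<Prod>k<j. 1 - norm q ^ Suc k)"
    using prod_lower[of "norm q"] q1 by auto
  have "(\<Prod>k<j. 1 - norm q ^ Suc k) \<le> norm (qf j)" for j
  proof -
    have "(\<Prod>k<j. 1 - norm q ^ Suc k) \<le> (\<Prod>k<j. norm (1 - q * q ^ k))"
    proof (intro prod_mono conjI)
      fix k
      show "0 \<le> 1 - norm q ^ Suc k" using q1 by (simp add: power_le_one mult_le_one)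
      show "1 - norm q ^ Suc k \<le> norm (1 - q * q ^ k)"
        by (metis norm_one norm_power norm_triangle_ineq2 power_Suc)
    qed
    thus ?thesis by (simp add: qpoch_def prod_norm)
  qed
  thus ?thesis using k0 k by (meson order_trans)
qed

abbreviation Xa :: "nat \<Rightarrow> real" where "Xa n \<equiv> (\<Prod>k<n. norm a + norm q ^ Suc k)"
abbreviation Xc :: "nat \<Rightarrow> real" where "Xc n \<equiv> (\<Prod>k<n. norm c + norm q ^ Suc k)"

lemma Ff_bound:
  assumes k0: "\<kappa> > 0" and k: "\<And>j. \<kappa> \<le> norm (qf j)" and rn: "r \<le> n"
  shows "norm (Ff n r) \<le> Xa n * Xc n * (2 * (2 * real n + 1)) / \<kappa>^2"
proof -
  have num: "norm (Cp n a * Cp n c * alpha r) \<le> Xa n * Xc n * (2 * (2 * real n + 1))"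
  proof -
    have h2: "norm (alpha r) \<le> 2 * (2 * real n + 1)" using alpha_bound[of r] rn by simp
    have p1: "0 \<le> Xa n" "0 \<le> Xc n" by (auto intro: prod_nonneg)
    have h1: "norm (Cp n a) * norm (Cp n c) \<le> Xa n * Xc n"
      by (rule mult_mono[OF Cp_norm Cp_norm]) (use p1 in auto)
    have "norm (Cp n a) * norm (Cp n c) * norm (alpha r) \<le> Xa n * Xc n * (2 * (2 * real n + 1))"
      by (rule mult_mono[OF h1 h2]) (use p1 in auto)
    thus ?thesis by (simp add: norm_mult)
  qed
  have den: "\<kappa>^2 \<le> norm (qf (n - r) * qf (n + r + 1))"
    unfolding norm_mult power2_eq_square by (intro mult_mono k) (use k0 in auto)
  show ?thesis unfolding Ff_def norm_divide
    by (rule frac_le[OF _ num _ den]) (use k0 in \<open>auto intro!: mult_nonneg_nonneg prod_nonneg\<close>)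
qed

definition \<rho>2 :: "nat \<Rightarrow> real" where
  "\<rho>2 k = ((real k + 2) * (2 * real k + 3)) / ((real k + 1) * (2 * real k + 1))
           * (norm a + norm q ^ Suc k) * (norm c + norm q ^ Suc k)"

lemma summable_B:
  "summable (\<lambda>n. (real n + 1) * (Xa n * Xc n * (2 * (2 * real n + 1)) / \<kappa>^2))"
proof -
  have e: "(real n + 1) * (Xa n * Xc n * (2 * (2 * real n + 1)) / \<kappa>^2) = (2 / \<kappa>^2) * (\<Prod>k<n. \<rho>2 k)" for n
    unfolding \<rho>2_def prod.distrib rat_prod by (simp add: field_simps)
  have z: "(\<lambda>k. norm q ^ Suc k) \<longlonglongrightarrow> 0" by (rule tend_aux)
  have lim: "\<rho>2 \<longlonglongrightarrow> 1 * (norm a + 0) * (norm c + 0)"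
    unfolding \<rho>2_def by (intro tendsto_intros rat_lim z)
  have ac: "norm a * norm c < 1"
    using a1 c1 by (metis le_less_trans mult_left_le norm_ge_zero less_imp_le)
  have "summable (\<lambda>n. \<Prod>k<n. \<rho>2 k)"
    by (rule summable_prod_ratio[OF _ lim]) (use ac in \<open>auto simp: \<rho>2_def intro!: mult_nonneg_nonneg divide_nonneg_nonneg\<close>)
  thus ?thesis unfolding e by (rule summable_mult)
qed

lemma Ff_abs_S: "(\<lambda>x. norm ((\<lambda>(n, r). Ff n r) x)) summable_on Sigma UNIV (\<lambda>n. {..n})"
proof -
  obtain \<kappa> where k0: "\<kappa> > 0" and k: "\<And>j. \<kappa> \<le> norm (qf j)" using kappa_ex by auto
  have bnd: "norm (norm (infsum (\<lambda>r. norm (Ff n r)) {..n})) \<le> (real n + 1) * (Xa n * Xc n * (2 * (2 * real n + 1)) / \<kappa>^2)" for n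
  proof -
    have "norm (norm (infsum (\<lambda>r. norm (Ff n r)) {..n})) = (\<Sum>r\<le>n. norm (Ff n r))"
      by (simp add: sum_nonneg)
    also have "\<dots> \<le> (\<Sum>r\<le>n. Xa n * Xc n * (2 * (2 * real n + 1)) / \<kappa>^2)"
      by (intro sum_mono Ff_bound[OF k0 k]) auto
    also have "\<dots> = (real n + 1) * (Xa n * Xc n * (2 * (2 * real n + 1)) / \<kappa>^2)" by simp
    finally show ?thesis .
  qed
  have "summable (\<lambda>n. norm (norm (infsum (\<lambda>r. norm (Ff n r)) {..n})))"
    by (rule summable_comparison_test'[OF summable_B]) (use bnd in simp)
  hence "(\<lambda>n. norm (infsum (\<lambda>r. norm (Ff n r)) {..n})) summable_on UNIV"
    by (rule norm_summable_imp_summable_on)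
  thus ?thesis by (intro Infinite_Sum.abs_summable_on_Sigma_iff[THEN iffD2] conjI ballI) auto
qed

lemma infsum_eq_suminf:
  fixes f :: "nat \<Rightarrow> complex"
  assumes "summable (\<lambda>n. norm (f n))"
  shows "infsum f UNIV = suminf f"
  using norm_summable_imp_has_sum[OF assms summable_sums[OF summable_norm_cancel[OF assms]]]
  by (rule infsumI)

lemma sg_infsum: "sg c = infsum (\<lambda>(n, r). Ff n r) (Sigma UNIV (\<lambda>n. {..n}))"
proof -
  have sS: "(\<lambda>(n, r). Ff n r) summable_on Sigma UNIV (\<lambda>n. {..n})"
    using Ff_abs_S by (rule abs_summable_summable)
  have "infsum (\<lambda>n. infsum (Ff n) {..n}) UNIV = infsum (\<lambda>(n, r). Ff n r) (Sigma UNIV (\<lambda>n. {..n}))"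
    by (rule infsum_Sigma'_banach[OF sS])
  moreover have "infsum (\<lambda>n. infsum (Ff n) {..n}) UNIV = infsum (st c) UNIV"
    by (rule infsum_cong) (simp add: st_as_sum)
  moreover have "summable (\<lambda>n. norm (st c n))"
    by (rule summable_comparison_test'[OF summable_\<rho>S]) (use st_bound c1 in auto)
  ultimately show ?thesis unfolding sg_def using infsum_eq_suminf by metis
qed


lemma CpA: "Cp (m + r) x = Cp r x * (\<Prod>k<m. x - q ^ Suc r * q ^ k)"
proof (induction m)
  case 0 then show ?case by simp
next
  case (Suc m)
  have "Cp (Suc m + r) x = Cp (m + r) x * (x - q ^ Suc (m + r))" by (simp add: Cp_Suc)
  also have "q ^ Suc (m + r) = q ^ Suc r * q ^ m" by (simp add: power_add)
  finally show ?case using Suc by (simp add: mult_ac)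
qed

lemma qfA: "qf (m + r + r + 1) = qf (2 * r + 1) * (\<Prod>k<m. 1 - q ^ Suc r * q ^ Suc r * q ^ k)"
proof (induction m)
  case 0 then show ?case by (simp add: mult_2)
next
  case (Suc m)
  have "qf (Suc m + r + r + 1) = qf (m + r + r + 1) * (1 - q ^ Suc (m + r + r + 1))"
    using qf_Suc[of "m + r + r + 1"] by simp
  also have "q ^ Suc (m + r + r + 1) = q ^ Suc r * q ^ Suc r * q ^ m"
    by (simp add: power_add[symmetric] algebra_simps)
  finally show ?case using Suc by (simp add: mult_ac)
qed

definition Kc :: complex where
  "Kc = qpoch_inf (q * a) q * qpoch_inf (q * c) q / (qpoch_inf q q * qpoch_inf (a * c) q)"
definition Tt :: "nat \<Rightarrow> complex" where
  "Tt r = alpha r * Cp r a * Cp r c / (qpoch (q * a) q r * qpoch (q * c) q r)"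

lemma norm_qa: "norm (q * a) < 1" "norm (q * c) < 1" "norm (a * c) < 1"
proof -
  have "norm q * norm a \<le> norm a" using q1 by (intro mult_left_le_one_le) auto
  thus "norm (q * a) < 1" using a1 by (simp add: norm_mult)
  have "norm q * norm c \<le> norm c" using q1 by (intro mult_left_le_one_le) auto
  thus "norm (q * c) < 1" using c1 by (simp add: norm_mult)
  have "norm a * norm c \<le> norm a" using c1 by (intro mult_left_le) auto
  thus "norm (a * c) < 1" using a1 by (simp add: norm_mult)
qed

lemma inner_val: "infsum (\<lambda>n. Ff n r) {r..} = Kc * Tt r"
proof -
  define u where "u = q ^ Suc r"
  have nu: "norm u \<le> 1" "norm (u * u) < 1"
  proof -
    have "norm u < 1" unfolding u_def norm_power by (rule nq_lt1)
    thus "norm u \<le> 1" by simp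
    have "norm (u * u) \<le> norm u" using \<open>norm u < 1\<close> by (simp add: norm_mult mult_left_le_one_le)
    thus "norm (u * u) < 1" using \<open>norm u < 1\<close> by simp
  qed
  have Gr: "gauss q c u u" unfolding gauss_def gauss_axioms_def qctx_def using q0 q1 c1 nu by simp
  define W where "W = Cp r a * Cp r c * alpha r / qf (2 * r + 1)"
  define PU where "PU m = (\<Prod>k<m. 1 - u * u * q ^ k)" for m
  have gD: "gauss.gD q u u m = qf m * PU m" for m
    unfolding gauss.gD_def[OF Gr] PU_def qpoch_def prod.distrib by simp
  have PUnz: "PU m \<noteq> 0" for m using gauss.gD_nz[OF Gr, of m] gD[of m] by simp
  have Fm: "Ff (m + r) r = W * gauss.gt q c u u a m" for m
  proof -
    have "Ff (m + r) r = Cp r a * gauss.gP q u a m * (Cp r c * gauss.gQ q c u m) * alpha r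
                         / (qf m * (qf (2 * r + 1) * PU m))"
    proof -
      have c1: "Cp (m + r) x = Cp r x * (\<Prod>k<m. x - u * q ^ k)" for x unfolding u_def by (rule CpA)
      have c2: "qf (m + r + r + 1) = qf (2 * r + 1) * PU m" unfolding u_def PU_def by (rule qfA)
      show ?thesis unfolding Ff_def c1 c2 gauss.gP_def[OF Gr] gauss.gQ_def[OF Gr] by (simp add: mult_ac)
    qed
    also have "\<dots> = W * gauss.gt q c u u a m"
      unfolding gauss.gt_def[OF Gr] gD W_def using qf_nz PUnz by (simp add: field_simps)
    finally show ?thesis .
  qed
  have sg: "summable (gauss.gt q c u u a)" by (rule gauss.summable_gt[OF Gr]) (use a1 in simp)
  have sums: "(\<lambda>m. Ff (m + r) r) sums (W * gauss.G q c u u a)"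
    unfolding Fm gauss.G_def[OF Gr] by (intro sums_mult summable_sums sg)
  have ns: "summable (\<lambda>m. norm (Ff (m + r) r))"
  proof -
    have S: "summable (\<lambda>m. norm W * gauss.gM q c u u m)"
      by (intro summable_mult gauss.summable_gM[OF Gr])
    have B: "norm (Ff (m + r) r) \<le> norm W * gauss.gM q c u u m" for m
      unfolding Fm norm_mult by (intro mult_left_mono gauss.gt_bound[OF Gr]) (use a1 in auto)
    show ?thesis by (rule summable_comparison_test'[OF S]) (simp add: B)
  qed
  have "infsum (\<lambda>n. Ff n r) {r..} = infsum (\<lambda>m. Ff (m + r) r) UNIV"
  proof -
    have b: "bij_betw (\<lambda>m. m + r) UNIV {r..}"
      by (rule bij_betwI[where g="\<lambda>n. n - r"]) auto
    show ?thesis using infsum_reindex_bij_betw[OF b, of "\<lambda>n. Ff n r"] by simp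
  qed
  also have "\<dots> = W * gauss.G q c u u a"
    using infsum_eq_suminf[OF ns] sums by (simp add: sums_iff)
  also have "\<dots> = Kc * Tt r"
  proof -
    have qg: "gauss.G q c u u a * qpoch_inf (a * c) q * qpoch_inf (u * u) q = qpoch_inf (a * u) q * qpoch_inf (u * c) q"
      by (rule gauss.qgauss[OF Gr]) (use a1 in simp)
    have ee: "Suc r + Suc r = Suc (2 * r + 1)" by simp
    have e': "u * u = q * q ^ (2 * r + 1)"
      unfolding u_def power_add[symmetric] ee by (rule power_Suc)
    have s1: "qpoch_inf q q = qf (2 * r + 1) * qpoch_inf (u * u) q"
      unfolding e' by (rule qpoch_inf_split)
    have s2: "qpoch_inf (q * a) q = qpoch (q * a) q r * qpoch_inf (a * u) q"
      using qpoch_inf_split[of "q * a" r] unfolding u_def by (simp add: algebra_simps)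
    have s3: "qpoch_inf (q * c) q = qpoch (q * c) q r * qpoch_inf (u * c) q"
      using qpoch_inf_split[of "q * c" r] unfolding u_def by (simp add: algebra_simps)
    have nz: "qpoch_inf (a * c) q \<noteq> 0" "qpoch_inf (u * u) q \<noteq> 0" "qpoch (q * a) q r \<noteq> 0"
             "qpoch (q * c) q r \<noteq> 0" "qf (2 * r + 1) \<noteq> 0"
      using qpoch_inf_nonzero'[OF norm_qa(3)] qpoch_inf_nonzero'[OF nu(2)]
        qpoch_nonzero[OF norm_qa(1)] qpoch_nonzero[OF norm_qa(2)] qf_nz q1 by auto
    have G: "gauss.G q c u u a = qpoch_inf (a * u) q * qpoch_inf (u * c) q / (qpoch_inf (a * c) q * qpoch_inf (u * u) q)"
      using qg nz by (simp add: field_simps)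
    show ?thesis unfolding Kc_def Tt_def W_def s1 s2 s3 G using nz by (simp add: field_simps)
  qed
  finally show ?thesis .
qed

lemma bij_swap: "bij_betw prod.swap (Sigma UNIV (\<lambda>r. {r..})) (Sigma UNIV (\<lambda>n. {..n}))"
  by (rule bij_betwI[where g=prod.swap]) auto

theorem thmA: "summable Tt \<and> sg c = Kc * suminf Tt"
proof -
  have sS: "(\<lambda>(n, r). Ff n r) summable_on Sigma UNIV (\<lambda>n. {..n})"
    using Ff_abs_S by (rule abs_summable_summable)
  have cs: "(\<lambda>x. (\<lambda>(n, r). Ff n r) (prod.swap x)) = (\<lambda>(r, n). Ff n r)"
    by (auto simp: fun_eq_iff)
  have sS': "(\<lambda>(r, n). Ff n r) summable_on Sigma UNIV (\<lambda>r. {r..})"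
    using summable_on_reindex_bij_betw[OF bij_swap, of "\<lambda>(n, r). Ff n r"] sS unfolding cs by simp
  have "sg c = infsum (\<lambda>(r, n). Ff n r) (Sigma UNIV (\<lambda>r. {r..}))"
    unfolding sg_infsum using infsum_reindex_bij_betw[OF bij_swap, of "\<lambda>(n, r). Ff n r"] unfolding cs by simp
  also have "\<dots> = infsum (\<lambda>r. infsum (\<lambda>n. Ff n r) {r..}) UNIV"
    using infsum_Sigma'_banach[of "\<lambda>r n. Ff n r", OF sS'] by simp
  also have "\<dots> = infsum (\<lambda>r. Kc * Tt r) UNIV" by (simp add: inner_val)
  finally have e: "sg c = infsum (\<lambda>r. Kc * Tt r) UNIV" .
  have "(\<lambda>r. infsum (\<lambda>n. Ff n r) {r..}) summable_on UNIV"
    using summable_on_Sigma_banach[of "\<lambda>r n. Ff n r", OF sS'] by simp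
  hence "(\<lambda>r. Kc * Tt r) summable_on UNIV" by (simp add: inner_val)
  hence "(\<lambda>r. norm (Kc * Tt r)) summable_on UNIV"
    by (rule summable_on_iff_abs_summable_on_complex[THEN iffD1])
  hence ns: "summable (\<lambda>r. norm (Kc * Tt r))" by (rule summable_on_imp_summable)
  have Knz: "Kc \<noteq> 0"
    unfolding Kc_def using qpoch_inf_nonzero'[OF norm_qa(1)] qpoch_inf_nonzero'[OF norm_qa(2)]
      qpoch_inf_nonzero'[OF norm_qa(3)] qpoch_inf_nonzero'[of q] q1 by simp
  have "summable (\<lambda>r. Kc * Tt r)" using ns by (rule summable_norm_cancel)
  hence sT: "summable Tt" using Knz by (simp add: summable_cmult_iff)
  have "sg c = suminf (\<lambda>r. Kc * Tt r)" unfolding e by (rule infsum_eq_suminf[OF ns])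
  also have "\<dots> = Kc * suminf Tt" by (rule suminf_mult[OF sT])
  finally show ?thesis using sT by simp
qed

end

lemma qpoch_div_pow:
  assumes "x \<noteq> 0"
  shows "qpoch (q / x) q n * x ^ n = (\<Prod>k<n. x - q ^ Suc k)"
proof (induction n)
  case 0 then show ?case by (simp add: qpoch_def)
next
  case (Suc n)
  have "qpoch (q / x) q (Suc n) * x ^ Suc n = (qpoch (q / x) q n * x ^ n) * ((1 - q / x * q ^ n) * x)"
    by (simp add: qpoch_Suc algebra_simps)
  also have "(1 - q / x * q ^ n) * x = x - q ^ Suc n" using assms by (simp add: field_simps)
  finally show ?case using Suc by simp
qed

theorem theorem6p1:
  fixes q a c :: complex
  assumes "0 < norm q" "norm q < 1"
    and "norm a < 1" "norm c < 1"
    and "a \<noteq> 0" "c \<noteq> 0"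
  shows "(\<Sum>n. qpoch (q / c) q n * c ^ n / (qpoch (q^2) (q^2) n * (1 + a * q ^ n))
              * q ^ (n * (n + 1) div 2))
       = qpoch_inf (q * a) q * qpoch_inf (q * c) q * qpoch_inf (- a * c) q
           / (qpoch_inf q q * qpoch_inf (a * c) q * qpoch_inf (- a) q)
         * (\<Sum>n. \<Sum>j\<in>{- int n..int n}.
              (-1) powi j * (1 - q ^ (2 * n + 1)) * q powi (int n ^ 2 - j ^ 2)
              * (qpoch (q / a) q n * qpoch (q / c) q n * (a * c) ^ n)
              / (qpoch (q * a) q n * qpoch (q * c) q n))"
proof -
  interpret Actx q a c
    by unfold_locales (use assms in auto)
  have L: "(\<lambda>n. qpoch (q / c) q n * c ^ n / (qpoch (q^2) (q^2) n * (1 + a * q ^ n)) * q ^ (n * (n + 1) div 2))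
        = lt c"
  proof
    fix n
    show "qpoch (q / c) q n * c ^ n / (qpoch (q^2) (q^2) n * (1 + a * q ^ n)) * q ^ (n * (n + 1) div 2) = lt c n"
      unfolding lt_def Cp_def qpoch_div_pow[OF assms(6)] by simp
  qed
  have R: "(\<lambda>n. \<Sum>j\<in>{- int n..int n}.
              (-1) powi j * (1 - q ^ (2 * n + 1)) * q powi (int n ^ 2 - j ^ 2)
              * (qpoch (q / a) q n * qpoch (q / c) q n * (a * c) ^ n)
              / (qpoch (q * a) q n * qpoch (q * c) q n)) = Tt"
  proof
    fix n
    have X: "qpoch (q / a) q n * qpoch (q / c) q n * (a * c) ^ n = Cp n a * Cp n c"
      using qpoch_div_pow[OF assms(5), where q=q and n=n] qpoch_div_pow[OF assms(6), where q=q and n=n]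
      unfolding Cp_def by (simp add: power_mult_distrib mult_ac)
    show "(\<Sum>j\<in>{- int n..int n}.
              (-1) powi j * (1 - q ^ (2 * n + 1)) * q powi (int n ^ 2 - j ^ 2)
              * (qpoch (q / a) q n * qpoch (q / c) q n * (a * c) ^ n)
              / (qpoch (q * a) q n * qpoch (q * c) q n)) = Tt n"
      unfolding X Tt_def alpha_def sum_divide_distrib[symmetric] sum_distrib_right[symmetric]
      by (simp add: mult_ac)
  qed
  have B: "qpoch_inf (- a) q * Lc c = qpoch_inf (- (a * c)) q * sg c"
    by (rule thmB[OF c1])
  have A: "sg c = Kc * suminf Tt" using thmA by simp
  have nz: "qpoch_inf (- a) q \<noteq> 0" by (rule qpoch_inf_nonzero') (use a1 in simp)
  have "Lc c = qpoch_inf (- (a * c)) q * (Kc * suminf Tt) / qpoch_inf (- a) q"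
    using B A nz by (simp add: field_simps)
  thus ?thesis unfolding L R Kc_def Lc_def[symmetric] by (simp add: field_simps)
qed

end
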